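(* Let $G=A(n,\theta)$ with $n=2m+1\ge3$ odd, and let $C$ be a union of conjugacy classes of elements of order $4$ containing, for each conjugacy class $K$ of elements of order $4$, exactly one of $K$ and $K^{(-1)}$. Then every linear character $\lambda$ of $G$ satisfies $\lambda(C)-\overline{\lambda(C)}=0$, and for every nonlinear irreducible character $\chi$ of $G$, $\frac{\chi(C)-\overline{\chi(C)}}{\chi(1)}\in\{2^n i,-2^n i\}$. Consequently the skew adjacency matrix of $\mathrm{Cay}(G,C)$ has all its eigenvalues in $\{0,\,2^n i,\,-2^n i\}$.
   Context: Let $\mathbb{F}_{2^n}$ be the field with $2^n$ elements, $\theta$ a generator of $\mathrm{Gal}(\mathbb{F}_{2^n}/\mathbb{F}_2)$, $a^\theta$ the image of $a$ under $\theta$. $G=A(n,\theta)$ is the group of matrices $\begin{bmatrix}1&a&b\\0&1&a^\theta\\0&0&1\end{bmatrix}$, $a,b\in\mathbb{F}_{2^n}$, denoted $(a,b)$, with $(a,b)(c,d)=(a+c,\,b+d+ac^\theta)$. For $Y\subseteq G$, $Y^{(-1)}=\{y^{-1}:y\in Y\}$ and $\chi(Y)=\sum_{y\in Y}\chi(y)$. The Cayley digraph $\mathrm{Cay}(G,C)$ has vertex set $G$ and an arc from $g$ to $cg$ for each $c\in C$; its skew adjacency matrix $S$ has $(u,v)$ entry $1$ if $(u,v)$ is an arc, $-1$ if $(v,u)$ is an arc, $0$ otherwise. *)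

theory Defs
  imports "HOL-Algebra.Multiplicative_Group" "Jordan_Normal_Form.Matrix"
begin

definition field_aut :: "('a::field \<Rightarrow> 'a) \<Rightarrow> bool" where
  "field_aut \<sigma> \<longleftrightarrow> bij \<sigma> \<and> (\<forall>x y. \<sigma> (x + y) = \<sigma> x + \<sigma> y)
     \<and> (\<forall>x y. \<sigma> (x * y) = \<sigma> x * \<sigma> y) \<and> \<sigma> 1 = 1"

definition gal_generator :: "('a::field \<Rightarrow> 'a) \<Rightarrow> bool" where
  "gal_generator \<theta> \<longleftrightarrow> field_aut \<theta> \<and> (\<forall>\<sigma>. field_aut \<sigma> \<longrightarrow> (\<exists>k::nat. \<sigma> = (\<theta> ^^ k)))"

definition A_grp :: "('a::field \<Rightarrow> 'a) \<Rightarrow> ('a \<times> 'a) monoid" where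
  "A_grp \<theta> = \<lparr>carrier = UNIV,
                monoid.mult = (\<lambda>(a, b) (c, d). (a + c, b + d + a * \<theta> c)),
                monoid.one = (0, 0)\<rparr>"

definition conj_class :: "('g, 'b) monoid_scheme \<Rightarrow> 'g \<Rightarrow> 'g set" where
  "conj_class G g = {inv\<^bsub>G\<^esub> h \<otimes>\<^bsub>G\<^esub> g \<otimes>\<^bsub>G\<^esub> h | h. h \<in> carrier G}"

definition is_rep :: "('g, 'b) monoid_scheme \<Rightarrow> nat \<Rightarrow> ('g \<Rightarrow> complex mat) \<Rightarrow> bool" where
  "is_rep G d \<rho> \<longleftrightarrow> (\<forall>g\<in>carrier G. \<rho> g \<in> carrier_mat d d)
     \<and> (\<forall>g\<in>carrier G. \<forall>h\<in>carrier G. \<rho> (g \<otimes>\<^bsub>G\<^esub> h) = \<rho> g * \<rho> h)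
     \<and> \<rho> \<one>\<^bsub>G\<^esub> = 1\<^sub>m d"

definition irreducible_rep :: "('g, 'b) monoid_scheme \<Rightarrow> nat \<Rightarrow> ('g \<Rightarrow> complex mat) \<Rightarrow> bool" where
  "irreducible_rep G d \<rho> \<longleftrightarrow> is_rep G d \<rho> \<and> d > 0 \<and>
     \<not> (\<exists>W. W \<subseteq> carrier_vec d \<and> 0\<^sub>v d \<in> W
            \<and> (\<forall>v\<in>W. \<forall>w\<in>W. v + w \<in> W)
            \<and> (\<forall>c. \<forall>v\<in>W. c \<cdot>\<^sub>v v \<in> W)
            \<and> (\<forall>g\<in>carrier G. \<forall>v\<in>W. \<rho> g *\<^sub>v v \<in> W)
            \<and> W \<noteq> {0\<^sub>v d} \<and> W \<noteq> carrier_vec d)"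

definition mat_trace :: "complex mat \<Rightarrow> complex" where
  "mat_trace A = (\<Sum>i<dim_row A. A $$ (i, i))"

definition irr_char :: "('g, 'b) monoid_scheme \<Rightarrow> ('g \<Rightarrow> complex) \<Rightarrow> bool" where
  "irr_char G \<chi> \<longleftrightarrow> (\<exists>d \<rho>. irreducible_rep G d \<rho> \<and> (\<forall>g\<in>carrier G. \<chi> g = mat_trace (\<rho> g)))"

definition linear_char :: "('g, 'b) monoid_scheme \<Rightarrow> ('g \<Rightarrow> complex) \<Rightarrow> bool" where
  "linear_char G \<chi> \<longleftrightarrow> (\<exists>\<rho>. is_rep G 1 \<rho> \<and> (\<forall>g\<in>carrier G. \<chi> g = mat_trace (\<rho> g)))"

definition char_sum :: "('g \<Rightarrow> complex) \<Rightarrow> 'g set \<Rightarrow> complex" where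
  "char_sum \<chi> Y = (\<Sum>y\<in>Y. \<chi> y)"

definition cay_arc :: "('g, 'b) monoid_scheme \<Rightarrow> 'g set \<Rightarrow> 'g \<Rightarrow> 'g \<Rightarrow> bool" where
  "cay_arc G C u v \<longleftrightarrow> u \<in> carrier G \<and> v \<in> carrier G \<and> (\<exists>c\<in>C. v = c \<otimes>\<^bsub>G\<^esub> u)"

definition skew_adj :: "('g, 'b) monoid_scheme \<Rightarrow> 'g set \<Rightarrow> 'g \<Rightarrow> 'g \<Rightarrow> complex" where
  "skew_adj G C u v = (if cay_arc G C u v then 1 else if cay_arc G C v u then -1 else 0)"

definition is_eigenvalue :: "'g set \<Rightarrow> ('g \<Rightarrow> 'g \<Rightarrow> complex) \<Rightarrow> complex \<Rightarrow> bool" where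
  "is_eigenvalue I M \<mu> \<longleftrightarrow> (\<exists>f. (\<exists>u\<in>I. f u \<noteq> 0) \<and>
      (\<forall>u\<in>I. (\<Sum>v\<in>I. M u v * f v) = \<mu> * f u))"

end

theory Submission
  imports Defs "HOL-Number_Theory.Residues" "HOL-Computational_Algebra.Primes" "Jordan_Normal_Form.Char_Poly"
begin

locale Aset =
  fixes \<theta> :: "'a::{field,finite} \<Rightarrow> 'a" and n :: nat
  assumes card: "card (UNIV :: 'a set) = 2 ^ n"
    and n_odd: "odd n" and n_ge: "n \<ge> 3"
    and gen: "gal_generator \<theta>"
begin

lemma two_zero: "(2::'a) = 0"
proof -
  have pos: "CHAR('a) > 0" by (rule finite_imp_CHAR_pos) simp
  have pr: "prime CHAR('a)" by (rule prime_CHAR_semidom[OF pos])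
  have "CHAR('a) dvd 2 ^ n" using CHAR_dvd_CARD[where 'a='a] card by simp
  hence "CHAR('a) dvd 2" using pr prime_dvd_power by blast
  hence "CHAR('a) = 1 \<or> CHAR('a) = 2" using two_is_prime_nat[unfolded prime_nat_iff] by blast
  hence "CHAR('a) = 2" using pr by auto
  hence "of_nat 2 = (0::'a)" by (subst of_nat_eq_0_iff_char_dvd) simp
  thus ?thesis by simp
qed

lemma add_self[simp]: "(x::'a) + x = 0"
proof -
  have "x + x = 2 * x" by (rule mult_2[symmetric])
  also have "\<dots> = 0" using two_zero by simp
  finally show ?thesis .
qed

lemma minus_id[simp]: "- (x::'a) = x"
proof -
  have "x + x = 0" by (rule add_self)
  hence "x = - x" by (simp only: add_eq_0_iff)
  thus ?thesis by (rule sym)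
qed

lemma add_eq0: "(x::'a) + y = 0 \<Longrightarrow> x = y"
  by (simp add: add_eq_0_iff)

lemma sq_eq_self: "(x::'a) ^ 2 = x \<Longrightarrow> x = 0 \<or> x = 1"
proof -
  assume "x^2 = x"
  hence "x * (x - 1) = 0" by (simp add: power2_eq_square algebra_simps)
  thus ?thesis by simp
qed

lemma diff_is_add[simp]: "(x::'a) - y = x + y"
  by (simp only: diff_conv_add_uminus minus_id)

lemma sq_add: "((x::'a) + y) ^ 2 = x ^ 2 + y ^ 2"
proof -
  have "(x + y)^2 = x^2 + 2*x*y + y^2" by (simp add: power2_eq_square algebra_simps)
  thus ?thesis using two_zero by simp
qed

lemma pow2k_add: "((x::'a) + y) ^ (2^k) = x ^ (2^k) + y ^ (2^k)"
proof (induction k)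
  case 0 then show ?case by simp
next
  case (Suc k)
  have "(x + y) ^ (2 ^ Suc k) = ((x + y) ^ (2^k))^2" by (simp add: power_mult[symmetric] mult.commute)
  also have "\<dots> = (x ^ (2^k))^2 + (y^(2^k))^2" using Suc sq_add by simp
  also have "\<dots> = x ^ (2 ^ Suc k) + y ^ (2 ^ Suc k)" by (simp add: power_mult[symmetric] mult.commute)
  finally show ?case .
qed

lemma sq_inj: "(x::'a) ^ 2 = y ^ 2 \<Longrightarrow> x = y"
proof -
  assume "x^2 = y^2"
  hence "(x + y)^2 = 0" using sq_add by simp
  hence "x + y = 0" by simp
  thus "x = y" by (rule add_eq0)
qed

lemma frob_aut: "field_aut (\<lambda>x::'a. x ^ 2)"
proof -
  have inj: "inj (\<lambda>x::'a. x ^ 2)" by (rule injI) (rule sq_inj)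
  hence "bij (\<lambda>x::'a. x ^ 2)" using finite_UNIV_inj_surj[OF _ inj] by (simp add: bij_def)
  thus ?thesis unfolding field_aut_def by (simp add: sq_add power_mult_distrib)
qed

lemma th_aut: "field_aut \<theta>" using gen unfolding gal_generator_def by simp

lemma th_add: "\<theta> (x + y) = \<theta> x + \<theta> y" using th_aut unfolding field_aut_def by simp
lemma th_mult: "\<theta> (x * y) = \<theta> x * \<theta> y" using th_aut unfolding field_aut_def by simp
lemma th_1[simp]: "\<theta> 1 = 1" using th_aut unfolding field_aut_def by simp
lemma th_bij: "bij \<theta>" using th_aut unfolding field_aut_def by simp
lemma th_0[simp]: "\<theta> 0 = 0" using th_add[of 0 0] by simp
lemma th_inj: "\<theta> x = \<theta> y \<longleftrightarrow> x = y" using th_bij by (meson bij_def injD)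
lemma th_nz: "\<theta> x = 0 \<longleftrightarrow> x = 0" using th_inj[of x 0] by simp
lemma th_pow: "\<theta> (x ^ k) = (\<theta> x) ^ k" by (induction k) (simp_all add: th_mult)
lemma th_inverse: "\<theta> (inverse x) = inverse (\<theta> x)"
proof (cases "x = 0")
  case True then show ?thesis by simp
next
  case False
  have h: "\<theta> (inverse x) * \<theta> x = 1" using th_mult[of "inverse x" x] False by simp
  have nz: "\<theta> x \<noteq> 0" using False th_nz by simp
  have "\<theta> (inverse x) = \<theta> (inverse x) * (\<theta> x * inverse (\<theta> x))" using nz by simp
  also have "\<dots> = inverse (\<theta> x)" using h by (simp only: mult.assoc[symmetric]) simp
  finally show ?thesis .
qed
lemma th_sum: "\<theta> (sum f A) = sum (\<lambda>x. \<theta> (f x)) A"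
  by (induction A rule: infinite_finite_induct) (simp_all add: th_add)

lemma ex_j: "\<exists>j. \<forall>x. (\<theta> ^^ j) x = x ^ 2"
proof -
  from gen frob_aut obtain j where "(\<lambda>x::'a. x ^ 2) = \<theta> ^^ j"
    unfolding gal_generator_def by blast
  then have "\<forall>x. (\<theta> ^^ j) x = x ^ 2" by metis
  then show ?thesis by blast
qed

lemma th_fixed: assumes "\<theta> x = x" shows "x = 0 \<or> x = 1"
proof -
  obtain j where j: "\<And>x. (\<theta> ^^ j) x = x ^ 2" using ex_j by blast
  have "\<And>k. (\<theta> ^^ k) x = x" by (induct_tac k) (simp_all add: assms)
  hence "x ^ 2 = x" using j by metis
  thus ?thesis by (rule sq_eq_self)
qed

lemma pow_card_minus1: assumes "(x::'a) \<noteq> 0" shows "x ^ (2^n - 1) = 1"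
proof -
  let ?A = "UNIV - {0::'a}"
  have bij: "bij_betw (\<lambda>y. x * y) ?A ?A"
    by (rule bij_betwI[where g="\<lambda>y. inverse x * y"]) (use assms in \<open>auto simp: field_simps\<close>)
  have "prod (\<lambda>y. y) ?A = prod (\<lambda>y. x * y) ?A"
    using prod.reindex_bij_betw[OF bij, of "\<lambda>y. y"] by simp
  also have "\<dots> = x ^ card ?A * prod (\<lambda>y. y) ?A" by (simp add: prod.distrib)
  finally have "x ^ card ?A = 1"
    by (subgoal_tac "prod (\<lambda>y. y) ?A \<noteq> 0") (auto simp: prod_zero_iff)
  moreover have "card ?A = 2^n - 1" using card by (simp add: card_Diff_singleton)
  ultimately show ?thesis by simp
qed

lemma pow_card: "(x::'a) ^ (2^n) = x"
proof (cases "x = 0")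
  case True then show ?thesis by simp
next
  case False
  have e: "(2::nat)^n = Suc (2^n - 1)" by simp
  have "x ^ (2^n) = x ^ (2^n - 1) * x"
    by (subst e) (simp only: power_Suc2)
  then show ?thesis using pow_card_minus1[OF False] by simp
qed

definition Tr :: "'a \<Rightarrow> 'a" where "Tr x = (\<Sum>k<n. x ^ (2^k))"

lemma Tr_add: "Tr (x + y) = Tr x + Tr y"
  unfolding Tr_def by (simp add: pow2k_add sum.distrib)

lemma Tr_sq: "(Tr x)^2 = Tr x"
proof -
  have sq_sum: "(\<Sum>k<m. x ^ (2^k))^2 = (\<Sum>k<m. x ^ (2^Suc k))" for m
  proof (induction m)
    case 0 then show ?case by simp
  next
    case (Suc m)
    have "(\<Sum>k<Suc m. x ^ (2^k))^2 = (\<Sum>k<m. x ^ (2^k))^2 + (x^(2^m))^2"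
      by (simp add: sq_add)
    also have "(x^(2^m))^2 = x ^ (2^Suc m)" by (simp add: power_mult[symmetric] mult.commute)
    finally show ?case using Suc by simp
  qed
  have a: "(\<Sum>k<Suc n. x^(2^k)) = x + (\<Sum>k<n. x^(2^Suc k))"
    using sum.lessThan_Suc_shift[of "\<lambda>k. x^(2^k)" n] by simp
  have b: "(\<Sum>k<Suc n. x^(2^k)) = Tr x + x" by (simp add: Tr_def pow_card)
  have "(Tr x)^2 = (\<Sum>k<n. x ^ (2^Suc k))" unfolding Tr_def by (rule sq_sum)
  also have "\<dots> = Tr x" using a b by (simp add: add.commute)
  finally show ?thesis .
qed

lemma Tr_01: "Tr x = 0 \<or> Tr x = 1"
proof -
  show ?thesis using Tr_sq[of x] by (rule sq_eq_self)
qed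

lemma Tr_th: "Tr (\<theta> x) = Tr x"
proof -
  have "Tr (\<theta> x) = \<theta> (Tr x)" unfolding Tr_def by (simp add: th_sum th_pow)
  thus ?thesis using Tr_01[of x] by auto
qed

lemma Tr_1: "Tr 1 = 1"
proof -
  have "Tr 1 = of_nat n" unfolding Tr_def by simp
  also obtain m where "n = 2*m+1" using n_odd oddE by blast
  hence "(of_nat n :: 'a) = 2 * of_nat m + 1" by simp
  finally show ?thesis using two_zero by simp
qed

lemma Tr_L: "Tr (t + \<theta> t) = 0"
  by (simp add: Tr_add Tr_th)

lemma ker_sub_H: assumes "Tr y = 0" shows "\<exists>t. y = t + \<theta> t"
proof -
  let ?K = "{y. Tr y = 0}"
  let ?L = "\<lambda>t. t + \<theta> t"
  have inj: "inj_on ?L ?K"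
  proof (rule inj_onI)
    fix s t assume s: "s \<in> ?K" and t: "t \<in> ?K" and eq: "?L s = ?L t"
    have "(s + t) + \<theta> (s + t) = (s + \<theta> s) + (t + \<theta> t)" by (simp add: th_add algebra_simps)
    also have "\<dots> = 0" using eq by simp
    finally have "\<theta> (s + t) = s + t" using add_eq0 by metis
    hence "s + t = 0 \<or> s + t = 1" by (rule th_fixed)
    moreover have "Tr (s + t) = 0" using s t by (simp add: Tr_add)
    ultimately have "s + t = 0" using Tr_1 by auto
    thus "s = t" by (rule add_eq0)
  qed
  have sub: "?L ` ?K \<subseteq> ?K" using Tr_L by auto
  have "?L ` ?K = ?K"
    by (rule card_subset_eq) (use sub card_image[OF inj] in auto)
  thus ?thesis using assms by auto
qed

lemma th_pow_inv: assumes "\<theta> v = inverse v"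
  shows "(\<theta> ^^ k) v = (if even k then v else inverse v)"
proof (induction k)
  case 0 then show ?case by simp
next
  case (Suc k)
  have "(\<theta> ^^ Suc k) v = \<theta> ((\<theta> ^^ k) v)" by simp
  also have "\<dots> = (if even k then \<theta> v else \<theta> (inverse v))" using Suc by simp
  also have "\<dots> = (if even k then inverse v else v)" using assms by (simp add: th_inverse)
  finally show ?case by simp
qed

lemma v_one: assumes v0: "(v::'a) \<noteq> 0" and tv: "\<theta> v = inverse v" shows "v = 1"
proof -
  have pw: "(\<theta> ^^ k) v = (if even k then v else inverse v)" for k
    by (rule th_pow_inv[OF tv])
  obtain j where j: "\<And>x. (\<theta> ^^ j) x = x ^ 2" using ex_j by blast
  show "v = 1"
  proof (cases "even j")
    case True
    hence "v^2 = v" using pw[of j] j by simp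
    thus ?thesis using v0 sq_eq_self by blast
  next
    case False
    hence "v^2 = inverse v" using pw[of j] j by simp
    hence "v^2 * v = inverse v * v" by simp
    hence u3: "v^3 = 1" using v0 by (simp add: power2_eq_square power3_eq_cube)
    obtain m where m: "n = 2*m+1" using n_odd oddE by blast
    have "\<exists>q. (4::nat)^k = 3*q+1" for k
    proof (induction k)
      case 0 then show ?case by simp
    next
      case (Suc k) then obtain q where "(4::nat)^k = 3*q+1" by blast
      hence "(4::nat)^Suc k = 3*(4*q+1)+1" by simp
      thus ?case by blast
    qed
    then obtain q where "(4::nat)^m = 3*q+1" by blast
    hence e2: "(2::nat)^n = 3*(2*q) + 2" using m by (simp add: power_mult power_add)
    have "v ^ (2^n) = (v^3)^(2*q) * v^2" unfolding e2 by (simp only: power_add power_mult)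
    hence "v = v^2" using pow_card u3 by simp
    thus ?thesis using v0 sq_eq_self by metis
  qed
qed

lemma th_u_inj: assumes "a \<noteq> 0" "b \<noteq> 0" "a * \<theta> a = b * \<theta> b" shows "a = b"
proof -
  define u where "u = a * inverse b"
  have u0: "u \<noteq> 0" using assms unfolding u_def by simp
  have tb: "\<theta> b \<noteq> 0" using assms th_nz by simp
  have "\<theta> u = \<theta> a * inverse (\<theta> b)" unfolding u_def by (simp only: th_mult th_inverse)
  also have "\<dots> = (a * \<theta> a) * inverse (a * \<theta> b)" using assms(1) tb by simp
  also have "\<dots> = (b * \<theta> b) * inverse (a * \<theta> b)" using assms(3) by simp
  also have "\<dots> = b * inverse a" using assms(1) tb by simp
  also have "\<dots> = inverse u" unfolding u_def by simp
  finally have "u = 1" using v_one u0 by blast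
  thus ?thesis using assms unfolding u_def by (simp add: field_simps)
qed

end

context Aset
begin

declare two_zero[simp]

abbreviation G where "G \<equiv> A_grp \<theta>"

definition mulA :: "'a \<times> 'a \<Rightarrow> 'a \<times> 'a \<Rightarrow> 'a \<times> 'a" where
  "mulA p q = (fst p + fst q, snd p + snd q + fst p * \<theta> (fst q))"

definition invA :: "'a \<times> 'a \<Rightarrow> 'a \<times> 'a" where
  "invA p = (fst p, snd p + fst p * \<theta> (fst p))"

lemma G_mult[simp]: "p \<otimes>\<^bsub>G\<^esub> q = mulA p q"
  unfolding A_grp_def mulA_def by (cases p; cases q) simp

lemma G_one[simp]: "\<one>\<^bsub>G\<^esub> = (0, 0)"
  unfolding A_grp_def by simp

lemma G_carrier[simp]: "carrier G = UNIV"
  unfolding A_grp_def by simp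

lemma mulA_assoc: "mulA (mulA p q) r = mulA p (mulA q r)"
  unfolding mulA_def by (simp add: th_add algebra_simps)

lemma mulA_inv: "mulA (invA p) p = (0, 0)"
  unfolding mulA_def invA_def by (simp add: algebra_simps)

lemma mulA_inv2: "mulA p (invA p) = (0, 0)"
  unfolding mulA_def invA_def by (simp add: algebra_simps)

lemma mulA_one[simp]: "mulA (0,0) p = p" "mulA p (0,0) = p"
  unfolding mulA_def by simp_all

lemma grp: "group G"
proof (rule groupI)
  fix x assume "x \<in> carrier G"
  show "\<exists>y\<in>carrier G. y \<otimes>\<^bsub>G\<^esub> x = \<one>\<^bsub>G\<^esub>"
    by (rule bexI[of _ "invA x"]) (simp_all add: mulA_inv)
qed (auto simp: mulA_assoc)

lemma G_inv[simp]: "inv\<^bsub>G\<^esub> p = invA p"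
  using group.inv_equality[OF grp, of "invA p" p] mulA_inv by simp

lemma invA_invA[simp]: "invA (invA p) = p"
  unfolding invA_def by (simp add: algebra_simps)

lemma mulA_left_cancel: "mulA (invA p) (mulA p q) = q"
  by (simp add: mulA_assoc[symmetric] mulA_inv)
lemma mulA_left_cancel2: "mulA p (mulA (invA p) q) = q"
  by (simp add: mulA_assoc[symmetric] mulA_inv2)
lemma mulA_right_cancel: "mulA (mulA q p) (invA p) = q"
  by (simp add: mulA_assoc mulA_inv2)
lemma mulA_right_cancel2: "mulA (mulA q (invA p)) p = q"
  by (simp add: mulA_assoc mulA_inv)

lemma pow2: "p [^]\<^bsub>G\<^esub> (2::nat) = (0, fst p * \<theta> (fst p))"
proof -
  have "p [^]\<^bsub>G\<^esub> (2::nat) = p \<otimes>\<^bsub>G\<^esub> p"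
    using monoid.nat_pow_Suc[OF group.is_monoid[OF grp]] by (simp add: numeral_2_eq_2)
  thus ?thesis by (simp add: mulA_def)
qed

lemma pow4: "p [^]\<^bsub>G\<^esub> (4::nat) = (0, 0)"
proof -
  have "p [^]\<^bsub>G\<^esub> (4::nat) = (p [^]\<^bsub>G\<^esub> (2::nat)) [^]\<^bsub>G\<^esub> (2::nat)"
    using monoid.nat_pow_pow[OF group.is_monoid[OF grp], of p 2 2] by simp
  thus ?thesis by (simp add: pow2)
qed

lemma ord_nz: assumes "fst p \<noteq> 0" shows "group.ord G p = 4"
proof -
  have d4: "group.ord G p dvd 4" using group.pow_eq_id[OF grp, of p 4] pow4 by simp
  have n2: "\<not> group.ord G p dvd 2" using group.pow_eq_id[OF grp, of p 2] pow2 assms th_nz by simp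
  have le: "group.ord G p \<le> 4" by (rule dvd_imp_le[OF d4]) simp
  have nz: "group.ord G p \<noteq> 0" using d4 by (metis dvd_0_left_iff zero_neq_numeral)
  have "group.ord G p = 1 \<or> group.ord G p = 2 \<or> group.ord G p = 3 \<or> group.ord G p = 4"
    using le nz by linarith
  thus ?thesis using d4 n2 by auto
qed

lemma ord_z: assumes "fst p = 0" shows "group.ord G p \<noteq> 4"
proof -
  have "group.ord G p dvd 2" using group.pow_eq_id[OF grp, of p 2] pow2 assms by simp
  thus ?thesis by auto
qed

lemma conj_eq: "mulA (mulA (invA h) g) h = (fst g, snd g + fst h * \<theta> (fst g) + fst g * \<theta> (fst h))"
  unfolding mulA_def invA_def by (simp add: th_add algebra_simps)

lemma comm_rel: "mulA p q = mulA (mulA q p) (0, fst p * \<theta> (fst q) + fst q * \<theta> (fst p))"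
  unfolding mulA_def by (simp add: algebra_simps)

end

context Aset
begin

lemma sum_pair: "(\<Sum>h\<in>UNIV. f h) = (\<Sum>a\<in>UNIV. \<Sum>b\<in>UNIV. f (a, b))"
proof -
  have "(\<Sum>a\<in>UNIV. \<Sum>b\<in>UNIV. f (a, b)) = (\<Sum>p\<in>UNIV \<times> UNIV. case p of (a, b) \<Rightarrow> f (a, b))"
    by (rule sum.cartesian_product)
  thus ?thesis by (simp only: UNIV_Times_UNIV case_prod_eta)
qed

lemma sum_shift: "(\<Sum>b\<in>UNIV. f (b + c)) = (\<Sum>b\<in>(UNIV::'a set). f b)"
proof -
  have "bij_betw (\<lambda>b. b + c) (UNIV::'a set) UNIV"
    by (rule bij_betwI[where g="\<lambda>b. b + c"]) (simp_all add: add.assoc)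
  thus ?thesis by (rule sum.reindex_bij_betw)
qed

lemma sum_scale: assumes "v \<noteq> 0" shows "(\<Sum>t\<in>UNIV. f (v * t)) = (\<Sum>t\<in>(UNIV::'a set). f t)"
proof -
  have "bij_betw (\<lambda>t. v * t) (UNIV::'a set) UNIV"
    by (rule bij_betwI[where g="\<lambda>t. inverse v * t"]) (use assms in \<open>simp_all add: mult.assoc[symmetric]\<close>)
  thus ?thesis by (rule sum.reindex_bij_betw)
qed

definition chi0 :: "'a \<Rightarrow> complex" where
  "chi0 t = (if Tr t = 0 then 1 else -1)"

lemma Tr_0[simp]: "Tr 0 = 0" unfolding Tr_def by (rule sum.neutral) simp

lemma chi0_add: "chi0 (x + y) = chi0 x * chi0 y"
  using Tr_01[of x] Tr_01[of y] unfolding chi0_def by (auto simp: Tr_add)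

lemma chi0_sq: "chi0 x * chi0 x = 1"
  unfolding chi0_def by simp

lemma chi0_0[simp]: "chi0 0 = 1" unfolding chi0_def by simp
lemma chi0_1[simp]: "chi0 1 = -1" unfolding chi0_def using Tr_1 by simp

lemma sum_chi0_nz: assumes "v \<noteq> 0" shows "(\<Sum>t\<in>UNIV. chi0 (v * t)) = 0"
proof -
  have "(\<Sum>t\<in>UNIV. chi0 t) = (\<Sum>t\<in>UNIV. chi0 (t + 1))" by (rule sum_shift[symmetric])
  also have "\<dots> = - (\<Sum>t\<in>UNIV. chi0 t)" by (simp add: chi0_add sum_negf)
  finally have "(\<Sum>t\<in>UNIV. chi0 t) = 0" by simp
  thus ?thesis using sum_scale[OF assms, of chi0] by simp
qed

lemma card_UNIV_c: "(\<Sum>t\<in>(UNIV::'a set). (1::complex)) = 2 ^ n"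
  using card by simp

lemma sum_chi0: "(\<Sum>t\<in>UNIV. chi0 (v * t)) = (if v = 0 then 2 ^ n else 0)"
  using sum_chi0_nz[of v] card_UNIV_c by auto

definition uA :: "'a \<Rightarrow> 'a" where "uA a = inverse (a * \<theta> a)"

lemma uA_nz: "a \<noteq> 0 \<Longrightarrow> uA a \<noteq> 0"
  unfolding uA_def by (simp add: th_nz)

lemma uA_inj: assumes "a \<noteq> 0" "b \<noteq> 0" "uA a = uA b" shows "a = b"
proof -
  have "a * \<theta> a = b * \<theta> b" using assms(3) by (simp only: uA_def inverse_eq_iff_eq)
  thus ?thesis using th_u_inj assms by blast
qed

lemma uA_mul: "a \<noteq> 0 \<Longrightarrow> uA a * (a * \<theta> a) = 1"
  unfolding uA_def by (simp add: th_nz field_simps)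

lemma uA_bij: "bij_betw uA (UNIV - {0}) (UNIV - {0})"
proof -
  have inj: "inj_on uA (UNIV - {0})" by (rule inj_onI) (use uA_inj in auto)
  have sub: "uA ` (UNIV - {0}) \<subseteq> UNIV - {0}" using uA_nz by auto
  have "uA ` (UNIV - {0}) = UNIV - {0}"
    by (rule card_subset_eq) (use sub card_image[OF inj] in auto)
  thus ?thesis using inj by (simp add: bij_betw_def)
qed

lemma sum_uA: "(\<Sum>a\<in>UNIV - {0}. chi0 (uA a * y)) = (if y = 0 then 2 ^ n - 1 else -1)"
proof -
  have "(\<Sum>a\<in>UNIV - {0}. chi0 (uA a * y)) = (\<Sum>v\<in>UNIV - {0}. chi0 (v * y))"
    using sum.reindex_bij_betw[OF uA_bij, of "\<lambda>v. chi0 (v * y)"] by simp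
  also have "\<dots> = (\<Sum>v\<in>UNIV. chi0 (v * y)) - chi0 (0 * y)"
    by (simp add: sum_diff1)
  also have "(\<Sum>v\<in>UNIV. chi0 (v * y)) = (if y = 0 then 2 ^ n else 0)"
    using sum_chi0[of y] by (simp add: mult.commute)
  finally show ?thesis by simp
qed

end

locale AC = Aset \<theta> n for \<theta> :: "'a::{field,finite} \<Rightarrow> 'a" and n +
  fixes C :: "('a \<times> 'a) set"
  assumes C_ord: "\<forall>g\<in>C. group.ord (A_grp \<theta>) g = 4"
    and C_union: "\<forall>g\<in>C. conj_class (A_grp \<theta>) g \<subseteq> C"
    and C_choice: "\<forall>g\<in>carrier (A_grp \<theta>). group.ord (A_grp \<theta>) g = 4 \<longrightarrow>
        ((conj_class (A_grp \<theta>) g \<subseteq> C) \<longleftrightarrow>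
         \<not> ((\<lambda>y. inv\<^bsub>A_grp \<theta>\<^esub> y) ` conj_class (A_grp \<theta>) g \<subseteq> C))"
begin

lemma conj_class_eq: "conj_class G g = {mulA (mulA (invA h) g) h | h. True}"
  unfolding conj_class_def by simp

lemma self_conj: "g \<in> conj_class G g"
  unfolding conj_class_eq by (rule CollectI, rule exI[of _ "(0,0)"]) (simp add: invA_def)

lemma C_nz: "g \<in> C \<Longrightarrow> fst g \<noteq> 0"
  using C_ord ord_z by blast

lemma C_conj: "g \<in> C \<Longrightarrow> mulA (mulA (invA h) g) h \<in> C"
  using C_union unfolding conj_class_eq by blast

lemma C_closed: assumes "(a, b) \<in> C" shows "(a, b + c * \<theta> a + a * \<theta> c) \<in> C"
  using C_conj[OF assms, of "(c, 0)"] by (simp add: conj_eq)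

lemma C_comm: assumes "mulA x y \<in> C" shows "mulA y x \<in> C"
proof -
  have "mulA (mulA (invA (invA y)) (mulA x y)) (invA y) \<in> C" by (rule C_conj[OF assms])
  thus ?thesis by (simp add: mulA_assoc mulA_inv2)
qed

lemma inv_conj: "invA (mulA (mulA (invA h) g) h) = mulA (mulA (invA h) (invA g)) h"
  by (simp only: conj_eq) (simp add: invA_def algebra_simps)

lemma C_xor: assumes "fst g \<noteq> 0" shows "g \<in> C \<longleftrightarrow> invA g \<notin> C"
proof -
  have o: "group.ord G g = 4" by (rule ord_nz[OF assms])
  have ch: "conj_class G g \<subseteq> C \<longleftrightarrow> \<not> (invA ` conj_class G g \<subseteq> C)"
    using C_choice[rule_format, of g] o by simp
  have e1: "conj_class G g \<subseteq> C \<longleftrightarrow> g \<in> C" using self_conj C_union by blast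
  have e2: "invA ` conj_class G g \<subseteq> C \<longleftrightarrow> invA g \<in> C"
  proof
    assume "invA ` conj_class G g \<subseteq> C" thus "invA g \<in> C" using self_conj by blast
  next
    assume i: "invA g \<in> C"
    show "invA ` conj_class G g \<subseteq> C"
    proof
      fix x assume "x \<in> invA ` conj_class G g"
      then obtain h where "x = invA (mulA (mulA (invA h) g) h)" unfolding conj_class_eq by blast
      thus "x \<in> C" using C_conj[OF i, of h] by (simp add: inv_conj)
    qed
  qed
  show ?thesis using ch e1 e2 by blast
qed

definition e :: "'a \<times> 'a \<Rightarrow> complex" where
  "e g = (if g \<in> C then 1 else if invA g \<in> C then -1 else 0)"

lemma e_z: assumes "fst g = 0" shows "e g = 0"
proof -
  have "g \<notin> C" using C_nz assms by blast
  moreover have "invA g \<notin> C" using C_nz[of "invA g"] assms by (auto simp: invA_def)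
  ultimately show ?thesis unfolding e_def by simp
qed

lemma e_nz: "fst g \<noteq> 0 \<Longrightarrow> e g = (if g \<in> C then 1 else -1)"
  unfolding e_def using C_xor by auto

lemma e_comm: "e (mulA x y) = e (mulA y x)"
proof -
  have m: "mulA x y \<in> C \<longleftrightarrow> mulA y x \<in> C" using C_comm by blast
  have "invA (mulA x y) = mulA (invA y) (invA x)" "invA (mulA y x) = mulA (invA x) (invA y)"
    unfolding invA_def mulA_def by (simp_all add: th_add algebra_simps)
  hence "invA (mulA x y) \<in> C \<longleftrightarrow> invA (mulA y x) \<in> C" using C_comm by metis
  thus ?thesis using m unfolding e_def by simp
qed

lemma shift_mem: assumes "a \<noteq> 0" "Tr (uA a * d) = 0"
  shows "(a, b) \<in> C \<longleftrightarrow> (a, b + d) \<in> C"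
proof -
  obtain s where s: "uA a * d = s + \<theta> s" using ker_sub_H[OF assms(2)] by blast
  have d: "d = (a * \<theta> a) * (uA a * d)" using uA_mul[OF assms(1)]
    by (simp add: mult.assoc[symmetric] mult.commute[of "a * \<theta> a"])
  have dd: "d = (a * s) * \<theta> a + a * \<theta> (a * s)"
    by (subst d, subst s) (simp add: th_mult algebra_simps)
  show ?thesis
  proof
    assume "(a, b) \<in> C" thus "(a, b + d) \<in> C" using C_closed[of a b "a * s"] dd by (simp add: add.assoc)
  next
    assume "(a, b + d) \<in> C"
    hence "(a, b + d + d) \<in> C" using C_closed[of a "b + d" "a * s"] dd by (simp add: add.assoc)
    thus "(a, b) \<in> C" by (simp add: add.assoc)
  qed
qed

lemma e_formula: assumes "a \<noteq> 0" shows "e (a, b) = e (a, 0) * chi0 (uA a * b)"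
proof (cases "Tr (uA a * b) = 0")
  case True
  have "(a, 0) \<in> C \<longleftrightarrow> (a, 0 + b) \<in> C" by (rule shift_mem[OF assms True])
  thus ?thesis using True assms by (simp add: e_nz chi0_def)
next
  case False
  hence T1: "Tr (uA a * b) = 1" using Tr_01 by blast
  have "Tr (uA a * (b + a * \<theta> a)) = 0"
    using T1 uA_mul[OF assms] Tr_1 by (simp add: distrib_left Tr_add)
  hence "(a, 0) \<in> C \<longleftrightarrow> (a, 0 + (b + a * \<theta> a)) \<in> C" by (rule shift_mem[OF assms])
  also have "(a, 0 + (b + a * \<theta> a)) = invA (a, b)" by (simp add: invA_def)
  also have "\<dots> \<in> C \<longleftrightarrow> (a, b) \<notin> C" using C_xor[of "(a,b)"] assms by auto
  finally show ?thesis using T1 assms by (auto simp: e_nz chi0_def)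
qed

lemma e_sq: "fst g \<noteq> 0 \<Longrightarrow> e g * e g = 1"
  by (simp add: e_nz)

end

context AC
begin

definition conv :: "('a \<times> 'a \<Rightarrow> complex) \<Rightarrow> ('a \<times> 'a \<Rightarrow> complex) \<Rightarrow> 'a \<times> 'a \<Rightarrow> complex" where
  "conv f g k = (\<Sum>h\<in>UNIV. f h * g (mulA (invA h) k))"

definition zf :: "'a \<times> 'a \<Rightarrow> complex" where "zf g = (if fst g = 0 then 1 else 0)"
definition df :: "'a \<times> 'a \<Rightarrow> complex" where "df g = (if g = (0, 0) then 1 else 0)"

abbreviation NN :: complex where "NN \<equiv> 2 ^ n"

lemma mi: "mulA (invA (a, b)) (x, y) = (a + x, b + (a * \<theta> a + y + a * \<theta> x))"
  unfolding mulA_def invA_def by (simp add: algebra_simps)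

lemma add_eq0_iff: "(a::'a) + x = 0 \<longleftrightarrow> a = x"
  using add_eq0 by auto

lemma inner_formula:
  "(\<Sum>b\<in>UNIV. e (a, b) * e (a + x, b + c)) =
     (if a \<noteq> 0 \<and> a + x \<noteq> 0 \<and> x = 0 then e (a, 0) * e (a + x, 0) * chi0 (uA (a + x) * c) * NN else 0)"
proof (cases "a = 0 \<or> a + x = 0")
  case True
  then show ?thesis using e_z by auto
next
  case False
  hence a0: "a \<noteq> 0" and a1: "a + x \<noteq> 0" by auto
  let ?u = "uA a" and ?v = "uA (a + x)"
  have "(\<Sum>b\<in>UNIV. e (a, b) * e (a + x, b + c)) =
        (\<Sum>b\<in>UNIV. (e (a, 0) * e (a + x, 0) * chi0 (?v * c)) * chi0 ((?u + ?v) * b))"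
  proof (rule sum.cong[OF refl])
    fix b
    show "e (a, b) * e (a + x, b + c) = (e (a, 0) * e (a + x, 0) * chi0 (?v * c)) * chi0 ((?u + ?v) * b)"
      using e_formula[OF a0, of b] e_formula[OF a1, of "b + c"]
      by (simp add: distrib_left distrib_right chi0_add mult_ac)
  qed
  also have "\<dots> = (e (a, 0) * e (a + x, 0) * chi0 (?v * c)) * (\<Sum>b\<in>UNIV. chi0 ((?u + ?v) * b))"
    by (simp add: sum_distrib_left)
  also have "(\<Sum>b\<in>UNIV. chi0 ((?u + ?v) * b)) = (if ?u + ?v = 0 then NN else 0)"
    by (rule sum_chi0)
  also have "?u + ?v = 0 \<longleftrightarrow> x = 0"
  proof
    assume "?u + ?v = 0" hence "?u = ?v" by (rule add_eq0)
    hence "a = a + x" using uA_inj a0 a1 by blast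
    thus "x = 0" by (metis add_cancel_left_right)
  qed simp
  finally show ?thesis using a0 a1 by auto
qed

lemma conv_ee: "conv e e (x, y) = (if x = 0 then (if y = 0 then - (NN * NN) + NN else NN) else 0)"
proof -
  have "conv e e (x, y) = (\<Sum>a\<in>UNIV. \<Sum>b\<in>UNIV. e (a, b) * e (a + x, b + (a * \<theta> a + y + a * \<theta> x)))"
    unfolding conv_def by (subst sum_pair) (simp add: mi)
  also have "\<dots> = (\<Sum>a\<in>UNIV. (if a \<noteq> 0 \<and> a + x \<noteq> 0 \<and> x = 0 then
        e (a, 0) * e (a + x, 0) * chi0 (uA (a + x) * (a * \<theta> a + y + a * \<theta> x)) * NN else 0))"
    by (simp only: inner_formula)
  finally have eq: "conv e e (x, y) = \<dots>" .
  show ?thesis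
  proof (cases "x = 0")
    case False
    then show ?thesis using eq by simp
  next
    case True
    have "conv e e (x, y) = (\<Sum>a\<in>UNIV. (if a \<noteq> 0 then - NN * chi0 (uA a * y) else 0))"
    proof -
      have "\<And>a. a \<noteq> 0 \<Longrightarrow> e (a, 0) * e (a, 0) * chi0 (uA a * (a * \<theta> a + y)) * NN = - NN * chi0 (uA a * y)"
        using e_sq uA_mul by (simp add: distrib_left chi0_add)
      thus ?thesis using eq True by (intro trans[OF eq] sum.cong) auto
    qed
    also have "\<dots> = (\<Sum>a\<in>UNIV - {0}. - NN * chi0 (uA a * y))"
      by (rule sum.mono_neutral_cong_right) auto
    also have "\<dots> = - NN * (\<Sum>a\<in>UNIV - {0}. chi0 (uA a * y))"
      by (rule sum_distrib_left[symmetric])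
    also have "\<dots> = - NN * (if y = 0 then NN - 1 else -1)"
      by (simp only: sum_uA)
    finally show ?thesis using True by (simp add: algebra_simps)
  qed
qed

lemma conv_z_left: "conv zf f (x, y) = (\<Sum>b\<in>UNIV. f (x, b))"
proof -
  have "conv zf f (x, y) = (\<Sum>a\<in>UNIV. \<Sum>b\<in>UNIV. zf (a, b) * f (a + x, b + (a * \<theta> a + y + a * \<theta> x)))"
    unfolding conv_def by (subst sum_pair) (simp add: mi)
  also have "\<dots> = (\<Sum>a\<in>UNIV. if (a::'a) = 0 then (\<Sum>b\<in>UNIV. f (x, b + y)) else 0)"
    by (intro sum.cong refl) (auto simp: zf_def add.commute)
  also have "\<dots> = (\<Sum>b\<in>UNIV. f (x, b + y))" by simp
  also have "\<dots> = (\<Sum>b\<in>UNIV. f (x, b))" by (rule sum_shift[of "\<lambda>b. f (x, b)"])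
  finally show ?thesis .
qed

lemma conv_z_right: "conv f zf (x, y) = (\<Sum>b\<in>UNIV. f (x, b))"
proof -
  have "conv f zf (x, y) = (\<Sum>a\<in>UNIV. \<Sum>b\<in>UNIV. f (a, b) * zf (a + x, b + (a * \<theta> a + y + a * \<theta> x)))"
    unfolding conv_def by (subst sum_pair) (simp add: mi)
  also have "\<dots> = (\<Sum>a\<in>UNIV. if a = x then (\<Sum>b\<in>UNIV. f (a, b)) else 0)"
    by (rule sum.cong[OF refl]) (simp add: zf_def add_eq0_iff)
  also have "\<dots> = (\<Sum>b\<in>UNIV. f (x, b))" by simp
  finally show ?thesis .
qed

lemma sum_e_fiber: "(\<Sum>b\<in>UNIV. e (x, b)) = 0"
proof (cases "x = 0")
  case True then show ?thesis using e_z by simp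
next
  case False
  have "(\<Sum>b\<in>UNIV. e (x, b)) = (\<Sum>b\<in>UNIV. e (x, 0) * chi0 (uA x * b))"
    by (rule sum.cong[OF refl]) (rule e_formula[OF False])
  also have "\<dots> = e (x, 0) * (\<Sum>b\<in>UNIV. chi0 (uA x * b))" by (simp add: sum_distrib_left)
  also have "\<dots> = 0" using sum_chi0_nz[OF uA_nz[OF False]] by simp
  finally show ?thesis .
qed

lemma conv_ze: "conv zf e k = 0"
  using conv_z_left[of e "fst k" "snd k"] sum_e_fiber by simp

lemma conv_zz: "conv zf zf k = NN * zf k"
  using conv_z_left[of zf "fst k" "snd k"] card_UNIV_c by (simp add: zf_def)

lemma conv_sz: "conv (\<lambda>_. 1) zf k = NN"
  using conv_z_right[of "\<lambda>_. 1" "fst k" "snd k"] card_UNIV_c by simp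

lemma conv_ss: "conv (\<lambda>_. 1) (\<lambda>_. 1) k = NN * NN"
proof -
  have "conv (\<lambda>_. 1) (\<lambda>_. 1) k = (\<Sum>h\<in>(UNIV :: ('a \<times> 'a) set). 1)" unfolding conv_def by simp
  also have "\<dots> = (\<Sum>a\<in>(UNIV::'a set). \<Sum>b\<in>(UNIV::'a set). 1)" by (rule sum_pair)
  finally show ?thesis using card_UNIV_c by simp
qed

lemma conv_d: "conv df f k = f k"
proof -
  have "conv df f k = (\<Sum>h\<in>UNIV. if h = (0,0) then f (mulA (invA h) k) else 0)"
    unfolding conv_def df_def by (rule sum.cong) auto
  also have "\<dots> = f k" by (simp add: invA_def)
  finally show ?thesis .
qed

lemma conv_lin: "conv (\<lambda>h. c1 * f h + c2 * g h) q k = c1 * conv f q k + c2 * conv g q k"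
  unfolding conv_def by (simp add: sum.distrib sum_distrib_left distrib_right mult.assoc)

lemma conv_ee_fun: "conv e e = (\<lambda>h. (- (NN * NN)) * df h + NN * zf h)"
proof
  fix k :: "'a \<times> 'a"
  obtain x y where k: "k = (x, y)" by (cases k)
  show "conv e e k = (- (NN * NN)) * df k + NN * zf k"
    unfolding k conv_ee df_def zf_def by auto
qed

lemma conv3: "conv (conv e e) e k = - (NN * NN) * e k"
  unfolding conv_ee_fun conv_lin conv_d conv_ze by simp

end

lemma mat_col_entry:
  fixes M :: "complex mat"
  assumes "M \<in> carrier_mat d d" "i < d" "j < d"
  shows "(M *\<^sub>v unit_vec d j) $ i = M $$ (i, j)"
proof -
  have "(M *\<^sub>v unit_vec d j) $ i = (\<Sum>k\<in>{0..<d}. M $$ (i, k) * (if k = j then 1 else 0))"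
    using assms by (simp add: scalar_prod_def cong: if_cong)
  also have "\<dots> = M $$ (i, j)" using assms by (simp add: if_distrib cong: if_cong)
  finally show ?thesis .
qed

lemma schur:
  fixes \<rho> :: "'g \<Rightarrow> complex mat"
  assumes irr: "irreducible_rep G d \<rho>" and M: "M \<in> carrier_mat d d"
    and comm: "\<forall>g\<in>carrier G. \<rho> g * M = M * \<rho> g"
  shows "\<exists>\<mu>. M = \<mu> \<cdot>\<^sub>m 1\<^sub>m d"
proof -
  have rep: "is_rep G d \<rho>" and d0: "d > 0" using irr unfolding irreducible_rep_def by auto
  have rc: "\<And>g. g \<in> carrier G \<Longrightarrow> \<rho> g \<in> carrier_mat d d" using rep unfolding is_rep_def by auto
  obtain as where cp: "char_poly M = (\<Prod>a\<leftarrow>as. [:- a, 1:])" and la: "length as = d"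
    using char_poly_factorized[OF M] by blast
  obtain \<mu> where mu: "\<mu> \<in> set as" using la d0 by (cases as) auto
  have "poly (char_poly M) \<mu> = 0" unfolding cp poly_prod_list
    by (rule prod_list_zero_iff[THEN iffD2]) (use mu in auto)
  hence "eigenvalue M \<mu>" using eigenvalue_root_char_poly[OF M] by simp
  then obtain v where ev: "eigenvector M v \<mu>" unfolding eigenvalue_def by blast
  have v: "v \<in> carrier_vec d" "v \<noteq> 0\<^sub>v d" "M *\<^sub>v v = \<mu> \<cdot>\<^sub>v v"
    using ev M unfolding eigenvector_def by auto
  define W where "W = {w \<in> carrier_vec d. M *\<^sub>v w = \<mu> \<cdot>\<^sub>v w}"
  have W1: "W \<subseteq> carrier_vec d" unfolding W_def by auto
  have W2: "0\<^sub>v d \<in> W" unfolding W_def using M by (auto intro!: eq_vecI simp: scalar_prod_def)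
  have W3: "\<forall>x\<in>W. \<forall>y\<in>W. x + y \<in> W" unfolding W_def using M
    by (auto simp: mult_add_distrib_mat_vec smult_add_distrib_vec)
  have W4: "\<forall>c. \<forall>x\<in>W. c \<cdot>\<^sub>v x \<in> W" unfolding W_def using M
    by (auto simp: mult_mat_vec smult_smult_assoc mult.commute)
  have W5: "\<forall>g\<in>carrier G. \<forall>x\<in>W. \<rho> g *\<^sub>v x \<in> W"
  proof (intro ballI)
    fix g x assume g: "g \<in> carrier G" and x: "x \<in> W"
    have xc: "x \<in> carrier_vec d" and Mx: "M *\<^sub>v x = \<mu> \<cdot>\<^sub>v x" using x unfolding W_def by auto
    have "M *\<^sub>v (\<rho> g *\<^sub>v x) = (M * \<rho> g) *\<^sub>v x" using M rc[OF g] xc by simp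
    also have "\<dots> = (\<rho> g * M) *\<^sub>v x" using comm g by simp
    also have "\<dots> = \<rho> g *\<^sub>v (\<mu> \<cdot>\<^sub>v x)" using M rc[OF g] xc Mx by simp
    also have "\<dots> = \<mu> \<cdot>\<^sub>v (\<rho> g *\<^sub>v x)" using rc[OF g] xc by (simp add: mult_mat_vec)
    finally show "\<rho> g *\<^sub>v x \<in> W" unfolding W_def using rc[OF g] xc by (auto intro: mult_mat_vec_carrier)
  qed
  have W6: "W \<noteq> {0\<^sub>v d}" using v unfolding W_def by auto
  have "W = carrier_vec d"
    using irr W1 W2 W3 W4 W5 W6 unfolding irreducible_rep_def by blast
  hence all: "\<And>w. w \<in> carrier_vec d \<Longrightarrow> M *\<^sub>v w = \<mu> \<cdot>\<^sub>v w" unfolding W_def by auto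
  have "M = \<mu> \<cdot>\<^sub>m 1\<^sub>m d"
  proof (rule eq_matI)
    fix i j assume i: "i < dim_row (\<mu> \<cdot>\<^sub>m 1\<^sub>m d)" and j: "j < dim_col (\<mu> \<cdot>\<^sub>m 1\<^sub>m d)"
    hence i': "i < d" and j': "j < d" by auto
    have "M $$ (i, j) = (M *\<^sub>v unit_vec d j) $ i" using mat_col_entry[OF M i' j'] by simp
    also have "\<dots> = (\<mu> \<cdot>\<^sub>v unit_vec d j) $ i" using all[of "unit_vec d j"] by simp
    also have "\<dots> = (\<mu> \<cdot>\<^sub>m 1\<^sub>m d) $$ (i, j)" using i' j' by simp
    finally show "M $$ (i, j) = (\<mu> \<cdot>\<^sub>m 1\<^sub>m d) $$ (i, j)" .
  qed (use M in auto)
  thus ?thesis by blast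
qed

lemma mat_mult_entry:
  fixes A B :: "complex mat"
  assumes "A \<in> carrier_mat d d" "B \<in> carrier_mat d d" "i < d" "j < d"
  shows "(A * B) $$ (i, j) = (\<Sum>k\<in>{0..<d}. A $$ (i, k) * B $$ (k, j))"
  using assms by (simp add: scalar_prod_def)

context AC
begin

lemma sum_ind: "(\<Sum>g\<in>UNIV. (if g = (h::'a \<times> 'a) then 1 else 0) * F g) = (F h :: complex)"
proof -
  have "(\<Sum>g\<in>UNIV. (if g = h then 1 else 0) * F g) = (\<Sum>g\<in>UNIV. if g = h then F g else 0)"
    by (rule sum.cong) auto
  thus ?thesis by simp
qed

definition Rm :: "('a \<times> 'a \<Rightarrow> complex mat) \<Rightarrow> nat \<Rightarrow> ('a \<times> 'a \<Rightarrow> complex) \<Rightarrow> complex mat" where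
  "Rm \<rho> d f = mat d d (\<lambda>(i, j). \<Sum>g\<in>UNIV. f g * \<rho> g $$ (i, j))"

lemma Rm_carrier[simp]: "Rm \<rho> d f \<in> carrier_mat d d"
  unfolding Rm_def by simp

lemma Rm_entry: "i < d \<Longrightarrow> j < d \<Longrightarrow> Rm \<rho> d f $$ (i, j) = (\<Sum>g\<in>UNIV. f g * \<rho> g $$ (i, j))"
  unfolding Rm_def by simp

lemma sum_reindex_mul: "(\<Sum>h'\<in>UNIV. F h') = (\<Sum>k\<in>UNIV. F (mulA (invA h) k))"
proof -
  have "bij_betw (\<lambda>k. mulA (invA h) k) UNIV UNIV"
    by (rule bij_betwI[where g="mulA h"]) (simp_all add: mulA_left_cancel mulA_left_cancel2)
  thus ?thesis by (rule sum.reindex_bij_betw[symmetric])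
qed

context
  fixes \<rho> d
  assumes rep: "is_rep G d \<rho>"
begin

lemma rho_carrier[simp]: "\<rho> g \<in> carrier_mat d d"
proof -
  have "\<forall>g\<in>carrier G. \<rho> g \<in> carrier_mat d d" using rep unfolding is_rep_def by blast
  thus ?thesis by (simp only: G_carrier) blast
qed

lemma rho_mult: "\<rho> (mulA p q) = \<rho> p * \<rho> q"
proof -
  have "\<forall>g\<in>carrier G. \<forall>h\<in>carrier G. \<rho> (g \<otimes>\<^bsub>G\<^esub> h) = \<rho> g * \<rho> h"
    using rep unfolding is_rep_def by blast
  thus ?thesis by (simp only: G_carrier G_mult) blast
qed

lemma rho_one: "\<rho> (0, 0) = 1\<^sub>m d"
proof -
  have "\<rho> \<one>\<^bsub>G\<^esub> = 1\<^sub>m d" using rep unfolding is_rep_def by blast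
  thus ?thesis by (simp only: G_one)
qed

lemma Rm_mult: "Rm \<rho> d f * Rm \<rho> d g = Rm \<rho> d (conv f g)"
proof (rule eq_matI)
  fix i j assume "i < dim_row (Rm \<rho> d (conv f g))" "j < dim_col (Rm \<rho> d (conv f g))"
  hence i: "i < d" and j: "j < d" by (auto simp: Rm_def)
  have "(Rm \<rho> d f * Rm \<rho> d g) $$ (i, j) =
        (\<Sum>k\<in>{0..<d}. (\<Sum>h\<in>UNIV. f h * \<rho> h $$ (i, k)) * (\<Sum>h'\<in>UNIV. g h' * \<rho> h' $$ (k, j)))"
    unfolding mat_mult_entry[OF Rm_carrier Rm_carrier i j]
    by (intro sum.cong refl) (simp add: Rm_entry i j)
  also have "\<dots> = (\<Sum>k\<in>{0..<d}. \<Sum>h\<in>UNIV. \<Sum>h'\<in>UNIV. f h * g h' * (\<rho> h $$ (i, k) * \<rho> h' $$ (k, j)))"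
    by (simp add: sum_product mult_ac)
  also have "\<dots> = (\<Sum>h\<in>UNIV. \<Sum>h'\<in>UNIV. \<Sum>k\<in>{0..<d}. f h * g h' * (\<rho> h $$ (i, k) * \<rho> h' $$ (k, j)))"
    by (rule trans[OF sum.swap], rule sum.cong[OF refl], rule sum.swap)
  also have "\<dots> = (\<Sum>h\<in>UNIV. \<Sum>h'\<in>UNIV. f h * g h' * \<rho> (mulA h h') $$ (i, j))"
    by (simp add: sum_distrib_left rho_mult mat_mult_entry[OF rho_carrier rho_carrier i j])
  also have "\<dots> = (\<Sum>h\<in>UNIV. \<Sum>k\<in>UNIV. f h * g (mulA (invA h) k) * \<rho> k $$ (i, j))"
  proof (rule sum.cong[OF refl])
    fix h :: "'a \<times> 'a"
    have "(\<Sum>h'\<in>UNIV. f h * g h' * \<rho> (mulA h h') $$ (i, j)) =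
      (\<Sum>k\<in>UNIV. f h * g (mulA (invA h) k) * \<rho> (mulA h (mulA (invA h) k)) $$ (i, j))"
      by (rule sum_reindex_mul)
    thus "(\<Sum>h'\<in>UNIV. f h * g h' * \<rho> (mulA h h') $$ (i, j)) =
      (\<Sum>k\<in>UNIV. f h * g (mulA (invA h) k) * \<rho> k $$ (i, j))" by (simp only: mulA_left_cancel2)
  qed
  also have "\<dots> = (\<Sum>k\<in>UNIV. (\<Sum>h\<in>UNIV. f h * g (mulA (invA h) k)) * \<rho> k $$ (i, j))"
    by (subst sum.swap) (simp add: sum_distrib_right)
  also have "\<dots> = Rm \<rho> d (conv f g) $$ (i, j)"
    using i j by (simp add: Rm_entry conv_def)
  finally show "(Rm \<rho> d f * Rm \<rho> d g) $$ (i, j) = Rm \<rho> d (conv f g) $$ (i, j)" .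
qed (auto simp: Rm_def)

lemma rho_dims: "dim_row (\<rho> h) = d" "dim_col (\<rho> h) = d"
  using rho_carrier[of h] unfolding carrier_mat_def by auto

lemma Rm_delta: "Rm \<rho> d (\<lambda>k. if k = h then 1 else 0) = \<rho> h"
proof (rule eq_matI)
  fix i j assume "i < dim_row (\<rho> h)" "j < dim_col (\<rho> h)"
  hence i: "i < d" and j: "j < d" by (simp_all only: rho_dims)
  show "Rm \<rho> d (\<lambda>k. if k = h then 1 else 0) $$ (i, j) = \<rho> h $$ (i, j)"
    using i j by (simp only: Rm_entry sum_ind)
qed (simp_all only: rho_dims Rm_def dim_row_mat dim_col_mat)

lemma Rm_df: "Rm \<rho> d df = 1\<^sub>m d"
proof -
  have "df = (\<lambda>k. if k = (0,0) then 1 else 0)" unfolding df_def by auto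
  thus ?thesis using Rm_delta[of "(0,0)"] rho_one by simp
qed

lemma Rm_lin: "Rm \<rho> d (\<lambda>h. c1 * f h + c2 * g h) = c1 \<cdot>\<^sub>m Rm \<rho> d f + c2 \<cdot>\<^sub>m Rm \<rho> d g"
  by (rule eq_matI) (auto simp: Rm_def sum.distrib sum_distrib_left distrib_right mult.assoc)

lemma Rm_comm:
  assumes fc: "\<And>x y. f (mulA x y) = f (mulA y x)"
  shows "\<rho> h * Rm \<rho> d f = Rm \<rho> d f * \<rho> h"
proof -
  let ?dh = "\<lambda>k. if k = h then 1 else (0::complex)"
  have c1: "conv ?dh f = (\<lambda>k. f (mulA (invA h) k))"
  proof
    fix k show "conv ?dh f k = f (mulA (invA h) k)"
      unfolding conv_def by (rule sum_ind)
  qed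
  have c2: "conv f ?dh = (\<lambda>k. f (mulA k (invA h)))"
  proof
    fix k
    have "conv f ?dh k = (\<Sum>g\<in>UNIV. if g = mulA k (invA h) then f g else 0)"
      unfolding conv_def
    proof (rule sum.cong[OF refl])
      fix g
      have "mulA (invA g) k = h \<longleftrightarrow> g = mulA k (invA h)"
      proof
        assume "mulA (invA g) k = h"
        hence "mulA g (mulA (invA g) k) = mulA g h" by simp
        hence "k = mulA g h" by (simp add: mulA_left_cancel2)
        thus "g = mulA k (invA h)" by (simp add: mulA_right_cancel)
      next
        assume "g = mulA k (invA h)"
        thus "mulA (invA g) k = h"
          by (metis invA_invA mulA_left_cancel mulA_right_cancel2)
      qed
      thus "f g * ?dh (mulA (invA g) k) = (if g = mulA k (invA h) then f g else 0)" by simp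
    qed
    also have "\<dots> = f (mulA k (invA h))" by simp
    finally show "conv f ?dh k = f (mulA k (invA h))" .
  qed
  have "\<rho> h * Rm \<rho> d f = Rm \<rho> d ?dh * Rm \<rho> d f" by (simp add: Rm_delta)
  also have "\<dots> = Rm \<rho> d (conv ?dh f)" by (rule Rm_mult)
  also have "conv ?dh f = conv f ?dh" unfolding c1 c2 using fc by simp
  also have "Rm \<rho> d (conv f ?dh) = Rm \<rho> d f * Rm \<rho> d ?dh" by (rule Rm_mult[symmetric])
  also have "\<dots> = Rm \<rho> d f * \<rho> h" by (simp add: Rm_delta)
  finally show ?thesis .
qed

lemma trace_Rm: "mat_trace (Rm \<rho> d f) = (\<Sum>g\<in>UNIV. f g * mat_trace (\<rho> g))"
proof -
  have dr: "dim_row (\<rho> g) = d" for g using rho_carrier[of g] unfolding carrier_mat_def by auto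
  have "mat_trace (Rm \<rho> d f) = (\<Sum>i<d. \<Sum>g\<in>UNIV. f g * \<rho> g $$ (i, i))"
    unfolding mat_trace_def by (intro sum.cong) (auto simp: Rm_entry Rm_def)
  also have "\<dots> = (\<Sum>g\<in>UNIV. \<Sum>i<d. f g * \<rho> g $$ (i, i))" by (rule sum.swap)
  also have "\<dots> = (\<Sum>g\<in>UNIV. f g * mat_trace (\<rho> g))"
    unfolding mat_trace_def dr by (simp add: sum_distrib_left)
  finally show ?thesis .
qed

end
end

lemma smult_one_mult: "(a \<cdot>\<^sub>m 1\<^sub>m d) * (b \<cdot>\<^sub>m 1\<^sub>m d) = ((a * b)::complex) \<cdot>\<^sub>m 1\<^sub>m d"
proof -
  have "(a \<cdot>\<^sub>m 1\<^sub>m d) * (b \<cdot>\<^sub>m 1\<^sub>m d) = a \<cdot>\<^sub>m (1\<^sub>m d * (b \<cdot>\<^sub>m 1\<^sub>m d))"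
    by (rule mult_smult_assoc_mat) auto
  also have "1\<^sub>m d * (b \<cdot>\<^sub>m 1\<^sub>m d) = b \<cdot>\<^sub>m 1\<^sub>m d" by (rule left_mult_one_mat) auto
  also have "a \<cdot>\<^sub>m (b \<cdot>\<^sub>m 1\<^sub>m d) = (a * b) \<cdot>\<^sub>m 1\<^sub>m d" by (rule eq_matI) auto
  finally show ?thesis .
qed

lemma smult_one_inj: "(a::complex) \<cdot>\<^sub>m 1\<^sub>m d = b \<cdot>\<^sub>m 1\<^sub>m d \<Longrightarrow> d > 0 \<Longrightarrow> a = b"
proof -
  assume eq: "a \<cdot>\<^sub>m 1\<^sub>m d = b \<cdot>\<^sub>m 1\<^sub>m d" and d: "d > 0"
  have "(a \<cdot>\<^sub>m 1\<^sub>m d) $$ (0, 0) = (b \<cdot>\<^sub>m 1\<^sub>m d) $$ (0, 0)" using eq by simp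
  thus "a = b" using d by simp
qed

lemma trace_smult_one: "mat_trace ((a::complex) \<cdot>\<^sub>m 1\<^sub>m d) = of_nat d * a"
  unfolding mat_trace_def by simp

lemma smult_one_vec: assumes "v \<in> carrier_vec d" shows "((a::complex) \<cdot>\<^sub>m 1\<^sub>m d) *\<^sub>v v = a \<cdot>\<^sub>v v"
proof (rule eq_vecI)
  fix i assume "i < dim_vec (a \<cdot>\<^sub>v v)"
  hence i: "i < d" using assms by simp
  have "((a \<cdot>\<^sub>m 1\<^sub>m d) *\<^sub>v v) $ i = (\<Sum>k\<in>{0..<d}. a * (if k = i then 1 else 0) * v $ k)"
    using i assms by (simp add: scalar_prod_def)
  also have "\<dots> = (\<Sum>k\<in>{0..<d}. if k = i then a * v $ k else 0)" by (rule sum.cong) auto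
  also have "\<dots> = (a \<cdot>\<^sub>v v) $ i" using i assms by simp
  finally show "((a \<cdot>\<^sub>m 1\<^sub>m d) *\<^sub>v v) $ i = (a \<cdot>\<^sub>v v) $ i" .
qed (use assms in auto)

context AC
begin

lemma Rm_scale: "Rm \<rho> d (\<lambda>h. c * f h) = c \<cdot>\<^sub>m Rm \<rho> d f"
  by (rule eq_matI) (auto simp: Rm_def sum_distrib_left mult.assoc)

lemma zf_comm: "zf (mulA x y) = zf (mulA y x)"
  unfolding zf_def mulA_def by (simp add: add.commute)

lemma inv_mul: "invA (mulA p q) = mulA (invA q) (invA p)"
  unfolding invA_def mulA_def by (simp add: th_add algebra_simps)

lemma sq_neg: "(z::complex) * z = - (a * a) \<Longrightarrow> z = a * \<i> \<or> z = - (a * \<i>)"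
proof -
  assume h: "z * z = - (a * a)"
  have "(z - a * \<i>) * (z + a * \<i>) = 0" using h by (simp add: algebra_simps)
  thus ?thesis by (auto simp: add_eq_0_iff)
qed

lemma indC_eq: "(if g \<in> C then 1 else 0) = (1 - zf g + e g) / (2::complex)"
proof (cases "fst g = 0")
  case True
  have "g \<notin> C" using C_nz True by blast
  then show ?thesis using e_z[OF True] True unfolding zf_def by simp
next
  case False
  then show ?thesis using e_nz[OF False] unfolding zf_def by auto
qed

lemma char_sum_eq: "char_sum \<chi> C = (\<Sum>g\<in>UNIV. \<chi> g - zf g * \<chi> g + e g * \<chi> g) / 2"
proof -
  have "char_sum \<chi> C = (\<Sum>g\<in>UNIV. (if g \<in> C then 1 else 0) * \<chi> g)"
    unfolding char_sum_def by (rule sum.mono_neutral_cong_left) auto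
  also have "\<dots> = (\<Sum>g\<in>UNIV. (\<chi> g - zf g * \<chi> g + e g * \<chi> g) / 2)"
    by (rule sum.cong[OF refl]) (simp add: indC_eq algebra_simps add_divide_distrib diff_divide_distrib)
  also have "\<dots> = (\<Sum>g\<in>UNIV. \<chi> g - zf g * \<chi> g + e g * \<chi> g) / 2"
    by (simp add: sum_divide_distrib)
  finally show ?thesis .
qed

end

context AC
begin

lemma NN_nz: "NN \<noteq> 0" by simp

lemma Rm_left: assumes rep: "is_rep G d \<rho>"
  shows "\<rho> h * Rm \<rho> d f = Rm \<rho> d (\<lambda>k. f (mulA (invA h) k))"
proof -
  let ?dh = "\<lambda>k. if k = h then 1 else (0::complex)"
  have c1: "conv ?dh f = (\<lambda>k. f (mulA (invA h) k))"
  proof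
    fix k show "conv ?dh f k = f (mulA (invA h) k)"
      unfolding conv_def by (rule sum_ind)
  qed
  have "\<rho> h * Rm \<rho> d f = Rm \<rho> d ?dh * Rm \<rho> d f" by (simp add: Rm_delta[OF rep])
  also have "\<dots> = Rm \<rho> d (conv ?dh f)" by (rule Rm_mult[OF rep])
  finally show ?thesis unfolding c1 .
qed

lemma scalar_class:
  assumes irr: "irreducible_rep G d \<rho>" and fc: "\<And>x y. f (mulA x y) = f (mulA y x)"
  shows "\<exists>\<mu>. Rm \<rho> d f = \<mu> \<cdot>\<^sub>m 1\<^sub>m d"
proof -
  have rep: "is_rep G d \<rho>" using irr unfolding irreducible_rep_def by auto
  show ?thesis
  proof (rule schur[OF irr Rm_carrier], intro ballI)
    fix h
    show "\<rho> h * Rm \<rho> d f = Rm \<rho> d f * \<rho> h" by (rule Rm_comm[OF rep]) (rule fc)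
  qed
qed

lemma trace_conv:
  assumes rep: "is_rep G d \<rho>" and "Rm \<rho> d f = a \<cdot>\<^sub>m 1\<^sub>m d" "Rm \<rho> d g = b \<cdot>\<^sub>m 1\<^sub>m d"
  shows "(\<Sum>k\<in>UNIV. conv f g k * mat_trace (\<rho> k)) = of_nat d * (a * b)"
proof -
  have "Rm \<rho> d (conv f g) = (a * b) \<cdot>\<^sub>m 1\<^sub>m d"
    using Rm_mult[OF rep, of f g] assms(2,3) smult_one_mult by simp
  hence "mat_trace (Rm \<rho> d (conv f g)) = of_nat d * (a * b)" by (simp add: trace_smult_one)
  thus ?thesis using trace_Rm[OF rep] by simp
qed

lemma trace_scal:
  assumes rep: "is_rep G d \<rho>" and "Rm \<rho> d f = a \<cdot>\<^sub>m 1\<^sub>m d"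
  shows "(\<Sum>k\<in>UNIV. f k * mat_trace (\<rho> k)) = of_nat d * a"
  using trace_Rm[OF rep, of f] assms(2) by (simp add: trace_smult_one)

lemma abelian_imp_linear:
  assumes irr: "irreducible_rep G d \<rho>"
    and chi: "\<forall>g\<in>carrier G. \<chi> g = mat_trace (\<rho> g)"
    and ab: "\<And>p q. \<rho> p * \<rho> q = \<rho> q * \<rho> p"
  shows "linear_char G \<chi>"
proof -
  have rep: "is_rep G d \<rho>" and d0: "d > 0" using irr unfolding irreducible_rep_def by auto
  have sc: "\<exists>\<mu>. \<rho> g = \<mu> \<cdot>\<^sub>m 1\<^sub>m d" for g
    by (rule schur[OF irr rho_carrier[OF rep]]) (use ab in auto)
  have "d = 1"
  proof (rule ccontr)
    assume "d \<noteq> 1"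
    hence d2: "d \<ge> 2" using d0 by auto
    define W :: "complex vec set" where "W = {v \<in> carrier_vec d. \<forall>i. 0 < i \<longrightarrow> i < d \<longrightarrow> v $ i = 0}"
    have "W \<subseteq> carrier_vec d" unfolding W_def by auto
    moreover have "0\<^sub>v d \<in> W" unfolding W_def by auto
    moreover have "\<forall>v\<in>W. \<forall>w\<in>W. v + w \<in> W" unfolding W_def by auto
    moreover have "\<forall>c. \<forall>v\<in>W. c \<cdot>\<^sub>v v \<in> W" unfolding W_def by auto
    moreover have "\<forall>g\<in>carrier G. \<forall>v\<in>W. \<rho> g *\<^sub>v v \<in> W"
    proof (intro ballI)
      fix g v assume "v \<in> W"
      hence v: "v \<in> carrier_vec d" "\<forall>i. 0 < i \<longrightarrow> i < d \<longrightarrow> v $ i = 0" unfolding W_def by auto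
      obtain \<mu> where "\<rho> g = \<mu> \<cdot>\<^sub>m 1\<^sub>m d" using sc by blast
      hence "\<rho> g *\<^sub>v v = \<mu> \<cdot>\<^sub>v v" using smult_one_vec[OF v(1)] by simp
      thus "\<rho> g *\<^sub>v v \<in> W" using v unfolding W_def by auto
    qed
    moreover have "unit_vec d 0 \<in> W" unfolding W_def using d0 by auto
    hence "W \<noteq> {0\<^sub>v d}" using d0 by (metis singletonD unit_vec_nonzero)
    moreover have "unit_vec d 1 \<notin> W" unfolding W_def using d2 by auto
    hence "W \<noteq> carrier_vec d" by auto
    ultimately show False using irr unfolding irreducible_rep_def by blast
  qed
  thus ?thesis unfolding linear_char_def using rep chi by blast
qed

lemma nonlinear_main:
  assumes irr: "irreducible_rep G d \<rho>"
    and chi: "\<forall>g\<in>carrier G. \<chi> g = mat_trace (\<rho> g)"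
    and nl: "\<not> linear_char G \<chi>"
  shows "(char_sum \<chi> C - cnj (char_sum \<chi> C)) / \<chi> (0, 0) \<in> {2 ^ n * \<i>, - (2 ^ n * \<i>)}"
proof -
  have rep: "is_rep G d \<rho>" and d0: "d > 0" using irr unfolding irreducible_rep_def by auto
  have chi': "\<And>g. \<chi> g = mat_trace (\<rho> g)" using chi unfolding G_carrier by blast
  let ?T = "\<lambda>f. (\<Sum>k\<in>UNIV. f k * \<chi> k)"
  have dnz: "(of_nat d :: complex) \<noteq> 0" using d0 by simp
  have "\<exists>\<mu>. Rm \<rho> d zf = \<mu> \<cdot>\<^sub>m 1\<^sub>m d" by (rule scalar_class[OF irr]) (rule zf_comm)
  then obtain mz where mz: "Rm \<rho> d zf = mz \<cdot>\<^sub>m 1\<^sub>m d" by blast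
  have "\<exists>\<mu>. Rm \<rho> d (\<lambda>_. 1) = \<mu> \<cdot>\<^sub>m 1\<^sub>m d" by (rule scalar_class[OF irr]) simp
  then obtain ms where ms: "Rm \<rho> d (\<lambda>_. 1) = ms \<cdot>\<^sub>m 1\<^sub>m d" by blast
  have "\<exists>\<mu>. Rm \<rho> d e = \<mu> \<cdot>\<^sub>m 1\<^sub>m d" by (rule scalar_class[OF irr]) (rule e_comm)
  then obtain me where me: "Rm \<rho> d e = me \<cdot>\<^sub>m 1\<^sub>m d" by blast
  have Tz: "?T zf = of_nat d * mz" using trace_scal[OF rep mz] chi' by simp
  have Ts: "?T (\<lambda>_. 1) = of_nat d * ms" using trace_scal[OF rep ms] chi' by simp
  have Te: "?T e = of_nat d * me" using trace_scal[OF rep me] chi' by simp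
  have Td: "?T df = of_nat d"
  proof -
    have "?T df = \<chi> (0, 0)" unfolding df_def by (rule sum_ind)
    also have "\<dots> = of_nat d" using chi' rho_one[OF rep] by (simp add: mat_trace_def)
    finally show ?thesis .
  qed
  have "?T (conv zf zf) = of_nat d * (mz * mz)" using trace_conv[OF rep mz mz] chi' by simp
  moreover have "?T (conv zf zf) = NN * ?T zf" by (simp add: conv_zz sum_distrib_left mult.assoc)
  ultimately have mz2: "mz * mz = NN * mz" using Tz dnz by (simp add: mult_ac)
  have mz0: "mz = 0"
  proof (rule ccontr)
    assume "mz \<noteq> 0"
    hence mzN: "mz = NN" using mz2 by simp
    have rz: "\<rho> z0 = 1\<^sub>m d" if z0: "fst z0 = 0" for z0
    proof -
      have "\<rho> z0 * Rm \<rho> d zf = Rm \<rho> d zf"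
        unfolding Rm_left[OF rep] by (rule arg_cong[where f="Rm \<rho> d"]) (use z0 in \<open>auto simp: zf_def mulA_def invA_def\<close>)
      hence h1: "\<rho> z0 * (NN \<cdot>\<^sub>m 1\<^sub>m d) = NN \<cdot>\<^sub>m 1\<^sub>m d" using mz mzN by simp
      have "\<rho> z0 * (NN \<cdot>\<^sub>m 1\<^sub>m d) = NN \<cdot>\<^sub>m (\<rho> z0 * 1\<^sub>m d)"
        by (rule mult_smult_distrib[OF rho_carrier[OF rep] one_carrier_mat])
      also have "\<rho> z0 * 1\<^sub>m d = \<rho> z0" by (rule right_mult_one_mat[OF rho_carrier[OF rep]])
      finally have eq: "NN \<cdot>\<^sub>m \<rho> z0 = NN \<cdot>\<^sub>m 1\<^sub>m d" using h1 by simp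
      show ?thesis
      proof (rule eq_matI)
        fix i j assume ij: "i < dim_row (1\<^sub>m d)" "j < dim_col (1\<^sub>m d :: complex mat)"
        hence "(NN \<cdot>\<^sub>m \<rho> z0) $$ (i, j) = (NN \<cdot>\<^sub>m 1\<^sub>m d) $$ (i, j)" using eq by simp
        hence "NN * \<rho> z0 $$ (i, j) = NN * (1\<^sub>m d) $$ (i, j)" using ij rho_dims[OF rep] by simp
        thus "\<rho> z0 $$ (i, j) = 1\<^sub>m d $$ (i, j)" by simp
      qed (simp_all add: rho_dims[OF rep])
    qed
    have "\<rho> p * \<rho> q = \<rho> q * \<rho> p" for p q
    proof -
      have "\<rho> p * \<rho> q = \<rho> (mulA p q)" by (simp add: rho_mult[OF rep])
      also have "\<dots> = \<rho> (mulA q p) * \<rho> (0, fst p * \<theta> (fst q) + fst q * \<theta> (fst p))"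
        by (subst comm_rel) (simp add: rho_mult[OF rep])
      also have "\<dots> = \<rho> q * \<rho> p * 1\<^sub>m d" using rz[of "(0, fst p * \<theta> (fst q) + fst q * \<theta> (fst p))"]
        by (simp add: rho_mult[OF rep])
      also have "\<dots> = \<rho> q * \<rho> p"
        by (rule right_mult_one_mat[OF mult_carrier_mat[OF rho_carrier[OF rep] rho_carrier[OF rep]]])
      finally show ?thesis .
    qed
    hence "linear_char G \<chi>" by (rule abelian_imp_linear[OF irr chi])
    thus False using nl by simp
  qed
  have "?T (conv (\<lambda>_. 1) zf) = of_nat d * (ms * mz)" using trace_conv[OF rep ms mz] chi' by simp
  moreover have "?T (conv (\<lambda>_. 1) zf) = NN * ?T (\<lambda>_. 1)" by (simp add: conv_sz sum_distrib_left)
  ultimately have ms0: "ms = 0" using Ts dnz mz0 by simp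
  have "?T (conv e e) = of_nat d * (me * me)" using trace_conv[OF rep me me] chi' by simp
  moreover have "?T (conv e e) = - (NN * NN) * ?T df + NN * ?T zf"
  proof -
    have "?T (conv e e) = (\<Sum>k\<in>UNIV. (- (NN * NN)) * (df k * \<chi> k) + NN * (zf k * \<chi> k))"
      unfolding conv_ee_fun by (rule sum.cong[OF refl]) (simp add: algebra_simps)
    also have "\<dots> = - (NN * NN) * ?T df + NN * ?T zf" by (simp only: sum.distrib sum_distrib_left)
    finally show ?thesis .
  qed
  ultimately have "of_nat d * (me * me) = of_nat d * (- (NN * NN))" using Td Tz mz0 by (simp add: algebra_simps)
  hence me2: "me * me = - (NN * NN)" using dnz by (simp only: mult_cancel_left) simp
  have cs: "char_sum \<chi> C = of_nat d * me / 2"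
  proof -
    have "char_sum \<chi> C = (?T (\<lambda>_. 1) - ?T zf + ?T e) / 2"
      unfolding char_sum_eq by (simp add: sum.distrib sum_subtractf)
    thus ?thesis using Ts Tz Te ms0 mz0 by simp
  qed
  have c0: "\<chi> (0, 0) = of_nat d" using chi' rho_one[OF rep] by (simp add: mat_trace_def)
  from sq_neg[OF me2] have "me = NN * \<i> \<or> me = - (NN * \<i>)" .
  moreover have "cnj (2 ^ n :: complex) = 2 ^ n" by simp
  ultimately have cme: "cnj me = - me" by auto
  have "(char_sum \<chi> C - cnj (char_sum \<chi> C)) / \<chi> (0, 0) = me"
    unfolding cs c0 using dnz cme by (simp add: field_simps)
  thus ?thesis using sq_neg[OF me2] by simp
qed

end

lemma one_by_one: "(M :: complex mat) \<in> carrier_mat 1 1 \<Longrightarrow> M = (M $$ (0, 0)) \<cdot>\<^sub>m 1\<^sub>m 1"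
  by (rule eq_matI) auto

context AC
begin

lemma exists_a0: "\<exists>a0::'a. a0 \<noteq> 0 \<and> a0 \<noteq> 1"
proof (rule ccontr)
  assume "\<not> ?thesis"
  hence "(UNIV::'a set) \<subseteq> {0, 1}" by auto
  hence "card (UNIV::'a set) \<le> card {0::'a, 1}" by (intro card_mono) auto
  also have "\<dots> \<le> 2" by (simp add: card_insert_le_m1)
  finally have "(2::nat) ^ n \<le> 2" using card by simp
  moreover have "(2::nat) ^ n \<ge> 2 ^ 3" using n_ge by (intro power_increasing) auto
  ultimately show False by simp
qed

lemma uA_1: "uA 1 = 1" unfolding uA_def by simp

lemma linear_main:
  assumes rep: "is_rep G 1 \<rho>" and lam: "\<forall>g\<in>carrier G. lam g = mat_trace (\<rho> g)"
  shows "char_sum lam C - cnj (char_sum lam C) = 0"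
proof -
  define l where "l g = \<rho> g $$ (0, 0)" for g
  have laml: "lam g = l g" for g
  proof -
    have "lam g = mat_trace (\<rho> g)" using lam unfolding G_carrier by blast
    also have "\<dots> = l g" unfolding mat_trace_def l_def rho_dims[OF rep] by simp
    finally show ?thesis .
  qed
  have lm: "l (mulA p q) = l p * l q" for p q
    unfolding l_def rho_mult[OF rep] using mat_mult_entry[OF rho_carrier[OF rep] rho_carrier[OF rep], of 0 0] by simp
  have l1: "l (0, 0) = 1" unfolding l_def rho_one[OF rep] by simp
  have lnz: "l p \<noteq> 0" for p
  proof -
    have "l p * l (invA p) = 1" using lm[of p "invA p"] mulA_inv2[of p] l1 by simp
    thus ?thesis by auto
  qed
  have lc: "l (0, a * \<theta> c + c * \<theta> a) = 1" for a c
  proof -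
    have "l (mulA (a, 0) (c, 0)) = l (mulA (c, 0) (a, 0)) * l (0, a * \<theta> c + c * \<theta> a)"
      by (subst comm_rel) (simp add: lm)
    moreover have "l (mulA (a, 0) (c, 0)) = l (mulA (c, 0) (a, 0))" by (simp add: lm mult.commute)
    ultimately show ?thesis using lnz[of "mulA (c, 0) (a, 0)"] by simp
  qed
  have ladd: "l (0, y1 + y2) = l (0, y1) * l (0, y2)" for y1 y2
    using lm[of "(0, y1)" "(0, y2)"] by (simp add: mulA_def)
  obtain a0 :: 'a where a0: "a0 \<noteq> 0" "a0 \<noteq> 1" using exists_a0 by blast
  define u where "u = uA a0"
  have u1: "u \<noteq> 1" using uA_inj[OF a0(1), of 1] a0 uA_1 unfolding u_def by auto
  have t0: "l (0, y) = 1" if T0: "Tr y = 0" for y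
  proof -
    obtain t where "y = t + \<theta> t" using ker_sub_H[OF T0] by blast
    hence "y = 1 * \<theta> t + t * \<theta> 1" by simp
    thus ?thesis using lc[of 1 t] by simp
  qed
  have tu: "l (0, y) = 1" if T0: "Tr (u * y) = 0" for y
  proof -
    obtain s where s: "u * y = s + \<theta> s" using ker_sub_H[OF T0] by blast
    have "y = (a0 * \<theta> a0) * (u * y)" using uA_mul[OF a0(1)] unfolding u_def
      by (simp add: mult.assoc[symmetric] mult.commute[of "a0 * \<theta> a0"])
    also have "\<dots> = a0 * \<theta> (a0 * s) + (a0 * s) * \<theta> a0"
      by (subst s) (simp add: th_mult th_add algebra_simps)
    finally show ?thesis using lc[of a0 "a0 * s"] by simp
  qed
  have w1: "l (0, w) = 1" if "Tr w + Tr (u * w) = 1" for w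
  proof -
    have "Tr w = 0 \<or> Tr (u * w) = 0"
    proof (rule ccontr)
      assume "\<not> ?thesis"
      hence "Tr w = 1" "Tr (u * w) = 1" using Tr_01 by blast+
      thus False using that by simp
    qed
    thus ?thesis using t0 tu by blast
  qed
  define y0 where "y0 = inverse (1 + u)"
  have u1': "1 + u \<noteq> 0" using u1 add_eq0[of 1 u] by auto
  have y0: "Tr y0 + Tr (u * y0) = 1"
  proof -
    have "Tr y0 + Tr (u * y0) = Tr ((1 + u) * y0)" by (simp add: Tr_add distrib_right)
    also have "(1 + u) * y0 = 1" unfolding y0_def using u1' by simp
    finally show ?thesis using Tr_1 by simp
  qed
  have lz: "l (0, y) = 1" for y
  proof (cases "Tr y + Tr (u * y) = 1")
    case True then show ?thesis by (rule w1)
  next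
    case False
    have S: "Tr y + Tr (u * y) = 0" using False Tr_01[of y] Tr_01[of "u * y"] by auto
    have "Tr (y + y0) + Tr (u * (y + y0)) = (Tr y + Tr (u * y)) + (Tr y0 + Tr (u * y0))"
      by (simp add: Tr_add distrib_left algebra_simps)
    also have "\<dots> = 1" using S y0 by simp
    finally have "l (0, y + y0) = 1" by (rule w1)
    moreover have "l (0, y0) = 1" using w1 y0 by blast
    moreover have "y = (y + y0) + y0" by (simp add: add.assoc)
    ultimately show ?thesis using ladd[of "y + y0" y0] by simp
  qed
  let ?T = "\<lambda>f. (\<Sum>k\<in>UNIV. f k * lam k)"
  have rtr: "\<And>k. mat_trace (\<rho> k) = lam k" using lam unfolding G_carrier by (metis UNIV_I)
  have R11: "\<And>f. Rm \<rho> 1 f = (Rm \<rho> 1 f $$ (0, 0)) \<cdot>\<^sub>m 1\<^sub>m 1" by (rule one_by_one) simp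
  define mz where "mz = Rm \<rho> 1 zf $$ (0, 0)"
  define ms where "ms = Rm \<rho> 1 (\<lambda>_. 1) $$ (0, 0)"
  define me where "me = Rm \<rho> 1 e $$ (0, 0)"
  have mz: "Rm \<rho> 1 zf = mz \<cdot>\<^sub>m 1\<^sub>m 1" unfolding mz_def by (rule R11)
  have ms: "Rm \<rho> 1 (\<lambda>_. 1) = ms \<cdot>\<^sub>m 1\<^sub>m 1" unfolding ms_def by (rule R11)
  have me: "Rm \<rho> 1 e = me \<cdot>\<^sub>m 1\<^sub>m 1" unfolding me_def by (rule R11)
  have Tz: "?T zf = mz" using trace_scal[OF rep mz] rtr by simp
  have Ts: "?T (\<lambda>_. 1) = ms" using trace_scal[OF rep ms] rtr by simp
  have Te: "?T e = me" using trace_scal[OF rep me] rtr by simp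
  have Td: "?T df = 1"
  proof -
    have "?T df = lam (0, 0)" unfolding df_def by (rule sum_ind)
    thus ?thesis using laml l1 by simp
  qed
  have Tz2: "?T zf = NN"
  proof -
    have "?T zf = (\<Sum>k\<in>UNIV. zf k)"
      by (rule sum.cong[OF refl]) (auto simp: zf_def laml lz)
    also have "\<dots> = (\<Sum>a\<in>UNIV. \<Sum>b\<in>(UNIV::'a set). zf (a, b))" by (rule sum_pair)
    also have "\<dots> = (\<Sum>a\<in>UNIV. if (a::'a) = 0 then NN else 0)"
      by (rule sum.cong[OF refl]) (simp add: zf_def card)
    also have "\<dots> = NN" by simp
    finally show ?thesis .
  qed
  have "?T (conv e e) = me * me" using trace_conv[OF rep me me] rtr by simp
  moreover have "?T (conv e e) = - (NN * NN) * ?T df + NN * ?T zf"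
  proof -
    have "?T (conv e e) = (\<Sum>k\<in>UNIV. (- (NN * NN)) * (df k * lam k) + NN * (zf k * lam k))"
      unfolding conv_ee_fun by (rule sum.cong[OF refl]) (simp add: algebra_simps)
    also have "\<dots> = - (NN * NN) * ?T df + NN * ?T zf" by (simp only: sum.distrib sum_distrib_left)
    finally show ?thesis .
  qed
  ultimately have "me * me = 0" using Td Tz2 by simp
  hence me0: "me = 0" by simp
  have "?T (conv (\<lambda>_. 1) (\<lambda>_. 1)) = ms * ms" using trace_conv[OF rep ms ms] rtr by simp
  moreover have "?T (conv (\<lambda>_. 1) (\<lambda>_. 1)) = NN * NN * ?T (\<lambda>_. 1)"
    by (simp add: conv_ss sum_distrib_left)
  ultimately have msr: "ms = 0 \<or> ms = NN * NN" using Ts by auto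
  have cs: "char_sum lam C = (ms - NN + me) / 2"
  proof -
    have "char_sum lam C = (?T (\<lambda>_. 1) - ?T zf + ?T e) / 2"
      unfolding char_sum_eq by (simp add: sum.distrib sum_subtractf)
    thus ?thesis using Ts Tz Tz2 Te by simp
  qed
  have "cnj (char_sum lam C) = char_sum lam C"
    unfolding cs me0 using msr by auto
  thus ?thesis by simp
qed

definition Op :: "('a \<times> 'a \<Rightarrow> complex) \<Rightarrow> ('a \<times> 'a \<Rightarrow> complex) \<Rightarrow> 'a \<times> 'a \<Rightarrow> complex" where
  "Op h f u = (\<Sum>w\<in>UNIV. h (mulA w (invA u)) * f w)"

lemma Op_comp: "Op h (Op h' f) u = Op (conv h' h) f u"
proof -
  have "Op h (Op h' f) u = (\<Sum>v\<in>UNIV. h (mulA v (invA u)) * (\<Sum>w\<in>UNIV. h' (mulA w (invA v)) * f w))"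
    by (simp only: Op_def)
  also have "\<dots> = (\<Sum>v\<in>UNIV. \<Sum>w\<in>UNIV. h (mulA v (invA u)) * (h' (mulA w (invA v)) * f w))"
    by (simp only: sum_distrib_left)
  also have "\<dots> = (\<Sum>w\<in>UNIV. \<Sum>v\<in>UNIV. h (mulA v (invA u)) * (h' (mulA w (invA v)) * f w))"
    by (rule sum.swap)
  also have "\<dots> = (\<Sum>w\<in>UNIV. (\<Sum>v\<in>UNIV. h' (mulA w (invA v)) * h (mulA v (invA u))) * f w)"
    by (rule sum.cong[OF refl]) (simp add: sum_distrib_right sum_distrib_left mult_ac)
  also have "\<dots> = (\<Sum>w\<in>UNIV. conv h' h (mulA w (invA u)) * f w)"
  proof (rule sum.cong[OF refl])
    fix w
    have bij: "bij_betw (\<lambda>v. mulA w (invA v)) UNIV UNIV"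
      by (rule bij_betwI[where g="\<lambda>g. mulA (invA g) w"])
         (simp_all add: inv_mul mulA_assoc mulA_inv mulA_inv2 mulA_left_cancel mulA_left_cancel2)
    have "conv h' h (mulA w (invA u)) = (\<Sum>g\<in>UNIV. h' g * h (mulA (invA g) (mulA w (invA u))))"
      unfolding conv_def by simp
    also have "\<dots> = (\<Sum>v\<in>UNIV. h' (mulA w (invA v)) * h (mulA (invA (mulA w (invA v))) (mulA w (invA u))))"
      by (rule sum.reindex_bij_betw[OF bij, symmetric])
    also have "\<dots> = (\<Sum>v\<in>UNIV. h' (mulA w (invA v)) * h (mulA v (invA u)))"
      by (simp add: inv_mul mulA_assoc mulA_left_cancel)
    finally show "(\<Sum>v\<in>UNIV. h' (mulA w (invA v)) * h (mulA v (invA u))) * f w =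
        conv h' h (mulA w (invA u)) * f w" by simp
  qed
  also have "\<dots> = Op (conv h' h) f u" unfolding Op_def by simp
  finally show ?thesis .
qed

lemma skew_e: "skew_adj G C u v = e (mulA v (invA u))"
proof -
  have a1: "cay_arc G C u v \<longleftrightarrow> mulA v (invA u) \<in> C"
    unfolding cay_arc_def
    by (auto simp: mulA_right_cancel mulA_right_cancel2 intro!: bexI[of _ "mulA v (invA u)"])
  have a2: "cay_arc G C v u \<longleftrightarrow> invA (mulA v (invA u)) \<in> C"
    unfolding cay_arc_def inv_mul
    by (auto simp: mulA_right_cancel mulA_right_cancel2 intro!: bexI[of _ "mulA u (invA v)"])
  show ?thesis unfolding skew_adj_def e_def a1 a2 by simp
qed

lemma eigen_main:
  assumes "is_eigenvalue (carrier G) (skew_adj G C) \<mu>"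
  shows "\<mu> \<in> {0, 2 ^ n * \<i>, - (2 ^ n * \<i>)}"
proof -
  obtain f where f0: "\<exists>u. f u \<noteq> 0" and fe: "\<And>u. (\<Sum>v\<in>UNIV. skew_adj G C u v * f v) = \<mu> * f u"
    using assms unfolding is_eigenvalue_def by auto
  have ef: "Op e f = (\<lambda>u. \<mu> * f u)"
  proof
    fix u show "Op e f u = \<mu> * f u" using fe[of u] unfolding Op_def skew_e by simp
  qed
  have Ol: "Op h (\<lambda>u. c * g u) = (\<lambda>u. c * Op h g u)" for h c g
    unfolding Op_def by (auto simp: sum_distrib_left mult_ac)
  have Os: "Op (\<lambda>k. c * h k) g = (\<lambda>u. c * Op h g u)" for h c g
    unfolding Op_def by (auto simp: sum_distrib_left mult_ac)
  have "Op e (Op e (Op e f)) = (\<lambda>u. \<mu> * (\<mu> * (\<mu> * f u)))" unfolding ef Ol by simp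
  moreover have "Op e (Op e (Op e f)) = Op (conv (conv e e) e) f"
  proof -
    have i: "Op e (Op e f) = Op (conv e e) f" by (rule ext) (rule Op_comp)
    show ?thesis by (rule ext) (subst i, rule Op_comp)
  qed
  moreover have "Op (conv (conv e e) e) f = (\<lambda>u. - (NN * NN) * (\<mu> * f u))"
    unfolding conv3 Os ef by simp
  ultimately have eq: "\<And>u. \<mu> * (\<mu> * (\<mu> * f u)) = - (NN * NN) * (\<mu> * f u)" by metis
  obtain u where u: "f u \<noteq> 0" using f0 by blast
  have "\<mu> * (\<mu> * (\<mu> * f u)) + NN * NN * (\<mu> * f u) = 0" using eq[of u] by simp
  hence "(\<mu> * (\<mu> * \<mu> + NN * NN)) * f u = 0" by (simp add: algebra_simps)
  hence "\<mu> * (\<mu> * \<mu> + NN * NN) = 0" using u by simp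
  hence "\<mu> = 0 \<or> \<mu> * \<mu> = - (NN * NN)" by (auto simp: add_eq_0_iff)
  thus ?thesis using sq_neg by auto
qed

end

theorem mainTheorem14:
  fixes \<theta> :: "'a::{field,finite} \<Rightarrow> 'a" and n :: nat and C :: "('a \<times> 'a) set"
  assumes card: "card (UNIV :: 'a set) = 2 ^ n"
    and n_odd: "odd n" and n_ge: "n \<ge> 3"
    and gen: "gal_generator \<theta>"
    and C_ord: "\<forall>g\<in>C. group.ord (A_grp \<theta>) g = 4"
    and C_union: "\<forall>g\<in>C. conj_class (A_grp \<theta>) g \<subseteq> C"
    and C_choice: "\<forall>g\<in>carrier (A_grp \<theta>). group.ord (A_grp \<theta>) g = 4 \<longrightarrow>
        ((conj_class (A_grp \<theta>) g \<subseteq> C) \<longleftrightarrow>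
         \<not> ((\<lambda>y. inv\<^bsub>A_grp \<theta>\<^esub> y) ` conj_class (A_grp \<theta>) g \<subseteq> C))"
  shows "(\<forall>lam. linear_char (A_grp \<theta>) lam \<longrightarrow>
            char_sum lam C - cnj (char_sum lam C) = 0)
       \<and> (\<forall>\<chi>. irr_char (A_grp \<theta>) \<chi> \<and> \<not> linear_char (A_grp \<theta>) \<chi> \<longrightarrow>
            (char_sum \<chi> C - cnj (char_sum \<chi> C)) / \<chi> \<one>\<^bsub>A_grp \<theta>\<^esub>
              \<in> {2 ^ n * \<i>, - (2 ^ n * \<i>)})
       \<and> (\<forall>\<mu>. is_eigenvalue (carrier (A_grp \<theta>)) (skew_adj (A_grp \<theta>) C) \<mu> \<longrightarrow>
            \<mu> \<in> {0, 2 ^ n * \<i>, - (2 ^ n * \<i>)})"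
  proof -
  interpret AC \<theta> n C by (unfold_locales; fact assms)
  have P1: "\<forall>lam. linear_char (A_grp \<theta>) lam \<longrightarrow> char_sum lam C - cnj (char_sum lam C) = 0"
  proof (intro allI impI)
    fix lam assume "linear_char (A_grp \<theta>) lam"
    then obtain \<rho> where "is_rep G 1 \<rho>" "\<forall>g\<in>carrier G. lam g = mat_trace (\<rho> g)"
      unfolding linear_char_def by blast
    thus "char_sum lam C - cnj (char_sum lam C) = 0" by (rule linear_main)
  qed
  have P2: "\<forall>\<chi>. irr_char (A_grp \<theta>) \<chi> \<and> \<not> linear_char (A_grp \<theta>) \<chi> \<longrightarrow>
            (char_sum \<chi> C - cnj (char_sum \<chi> C)) / \<chi> \<one>\<^bsub>A_grp \<theta>\<^esub>
              \<in> {2 ^ n * \<i>, - (2 ^ n * \<i>)}"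
  proof (intro allI impI)
    fix \<chi> assume h: "irr_char (A_grp \<theta>) \<chi> \<and> \<not> linear_char (A_grp \<theta>) \<chi>"
    then obtain d \<rho> where "irreducible_rep G d \<rho>" "\<forall>g\<in>carrier G. \<chi> g = mat_trace (\<rho> g)"
      unfolding irr_char_def by blast
    from nonlinear_main[OF this] h
    show "(char_sum \<chi> C - cnj (char_sum \<chi> C)) / \<chi> \<one>\<^bsub>A_grp \<theta>\<^esub> \<in> {2 ^ n * \<i>, - (2 ^ n * \<i>)}"
      by simp
  qed
  have P3: "\<forall>\<mu>. is_eigenvalue (carrier (A_grp \<theta>)) (skew_adj (A_grp \<theta>) C) \<mu> \<longrightarrow>
            \<mu> \<in> {0, 2 ^ n * \<i>, - (2 ^ n * \<i>)}"
    using eigen_main by blast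
  show ?thesis using P1 P2 P3 by blast
qed

end
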